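(* Let $r\ge 3$ and $s$ be coprime odd integers with $0<s<r$, and set $q=\exp(i\pi s/r)$. Then the Riley algebra $\mathbb{Q}[P(r,s)]\cong\mathbb{Q}[t]/(R(t))$ of the two-bridge knot $K(r,s)$ is isomorphic, as a $\mathbb{Q}$-algebra, to the SO$_3$ signed Verlinde algebra $V_q^+$.
   Context: For an integer $n$ put $[n]=\frac{q^n-q^{-n}}{q-q^{-1}}$ (a real number), $[n]!=[n][n-1]\cdots[1]$, and for $1\le n\le r-1$ let $\epsilon_n=\operatorname{sign}[n]=(-1)^{\lfloor ns/r\rfloor}$ (so $\epsilon_1=1$ and $\epsilon_n=\epsilon_{r-n}$). A triple $(i,j,k)\in\{0,\dots,r-2\}^3$ is $r$-admissible if $i\le j+k$, $j\le i+k$, $k\le i+j$, $i+j+k$ is even and $i+j+k\le 2r-4$; for such a triple write $i=b+c$, $j=a+c$, $k=a+b$ and set $\langle i,j,k\rangle=(-1)^{a+b+c}\frac{[a+b+c+1]![a]![b]![c]!}{[a+b]![a+c]![b+c]!}$ (a nonzero real number). Let $V_q$ be the $\mathbb{Q}$-vector space with basis $e_0,\dots,e_{r-2}$, with the symmetric bilinear form $\eta$ for which this basis is orthogonal and $\eta(e_i,e_i)=(-1)^i\epsilon_{i+1}$, and the symmetric trilinear form $\omega$ with $\omega(e_i,e_j,e_k)=\operatorname{sign}\langle i,j,k\rangle$ if $(i,j,k)$ is $r$-admissible and $0$ otherwise. The product on $V_q$ is defined by $\eta(x\cdot y,z)=\omega(x,y,z)$; this makes $V_q$ a commutative associative unital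 $\mathbb{Q}$-algebra with unit $e_0$ and a Frobenius algebra with counit $\epsilon(f)=\eta(f,e_0)$ (so $\eta(x,y)=\epsilon(xy)$). Let $V_q^+\subset V_q$ be the span of $e_0,e_2,\dots,e_{r-3}$; it is a subalgebra, and a Frobenius algebra with the restrictions $\eta^+,\epsilon^+$ of $\eta,\epsilon$. The two-bridge knot $K(r,s)$ has knot group $G=\langle u,v\mid wu=vw\rangle$ with $w=u^{\epsilon_1}v^{\epsilon_2}u^{\epsilon_3}\cdots u^{\epsilon_{r-2}}v^{\epsilon_{r-1}}$. The Riley polynomial $R(t)\in\mathbb{Z}[t]$ is the upper-left entry of the matrix product $A_1A_2\cdots A_{r-1}$, where $A_k=\begin{pmatrix}1&1\\0&1\end{pmatrix}^{\epsilon_k}$ for $k$ odd and $A_k=\begin{pmatrix}1&0\\t&1\end{pmatrix}^{\epsilon_k}$ for $k$ even. $P(r,s)$ denotes the set of conjugacy classes of representations $\rho:G\to\mathrm{SL}_2(\mathbb{C})$ with $\rho(u)$ parabolic; it is a $0$-dimensional variety over $\mathbb{Q}$ whose algebra of functions $\mathbb{Q}[P(r,s)]$ is $\mathbb{Q}[t]/(R(t))$. *)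

theory Defs
  imports Complex_Main "HOL-Computational_Algebra.Polynomial"
begin

definition qroot :: "nat \<Rightarrow> nat \<Rightarrow> complex" where
  "qroot r s = exp (\<i> * complex_of_real (pi * real s / real r))"

text \<open>[n] = (q^n - q^-n)/(q - q^-1), a real number (we take the real part).\<close>
definition qint :: "nat \<Rightarrow> nat \<Rightarrow> nat \<Rightarrow> real" where
  "qint r s n = Re ((qroot r s ^ n - inverse (qroot r s) ^ n) / (qroot r s - inverse (qroot r s)))"

definition qfact :: "nat \<Rightarrow> nat \<Rightarrow> nat \<Rightarrow> real" where
  "qfact r s n = (\<Prod>m\<in>{1..n}. qint r s m)"

definition sign_real :: "real \<Rightarrow> int" where
  "sign_real x = (if 0 < x then 1 else if x < 0 then -1 else 0)"

definition eps :: "nat \<Rightarrow> nat \<Rightarrow> nat \<Rightarrow> int" where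
  "eps r s n = sign_real (qint r s n)"

definition admissible :: "nat \<Rightarrow> nat \<Rightarrow> nat \<Rightarrow> nat \<Rightarrow> bool" where
  "admissible r i j k \<longleftrightarrow> i \<le> r - 2 \<and> j \<le> r - 2 \<and> k \<le> r - 2 \<and>
     i \<le> j + k \<and> j \<le> i + k \<and> k \<le> i + j \<and> even (i + j + k) \<and> i + j + k \<le> 2 * r - 4"

text \<open>For admissible (i,j,k): i = b+c, j = a+c, k = a+b.\<close>
definition theta :: "nat \<Rightarrow> nat \<Rightarrow> nat \<Rightarrow> nat \<Rightarrow> nat \<Rightarrow> real" where
  "theta r s i j k =
    (let a = (j + k - i) div 2; b = (i + k - j) div 2; c = (i + j - k) div 2 in
     (-1) ^ (a + b + c) * (qfact r s (a + b + c + 1) * qfact r s a * qfact r s b * qfact r s c)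
       / (qfact r s (a + b) * qfact r s (a + c) * qfact r s (b + c)))"

text \<open>Elements of V_q are coefficient vectors x, x k = coefficient of e_k (k \<le> r-2).\<close>
definition Vq :: "nat \<Rightarrow> (nat \<Rightarrow> rat) set" where
  "Vq r = {x. \<forall>k. r - 2 < k \<longrightarrow> x k = 0}"

definition Vplus :: "nat \<Rightarrow> (nat \<Rightarrow> rat) set" where
  "Vplus r = {x. \<forall>k. (r - 3 < k \<or> odd k) \<longrightarrow> x k = 0}"

definition eta_diag :: "nat \<Rightarrow> nat \<Rightarrow> nat \<Rightarrow> int" where
  "eta_diag r s k = (-1) ^ k * eps r s (k + 1)"

definition eta :: "nat \<Rightarrow> nat \<Rightarrow> (nat \<Rightarrow> rat) \<Rightarrow> (nat \<Rightarrow> rat) \<Rightarrow> rat" where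
  "eta r s x y = (\<Sum>k\<le>r - 2. x k * y k * of_int (eta_diag r s k))"

definition omega_basis :: "nat \<Rightarrow> nat \<Rightarrow> nat \<Rightarrow> nat \<Rightarrow> nat \<Rightarrow> int" where
  "omega_basis r s i j k = (if admissible r i j k then sign_real (theta r s i j k) else 0)"

definition omega :: "nat \<Rightarrow> nat \<Rightarrow> (nat \<Rightarrow> rat) \<Rightarrow> (nat \<Rightarrow> rat) \<Rightarrow> (nat \<Rightarrow> rat) \<Rightarrow> rat" where
  "omega r s x y z = (\<Sum>i\<le>r - 2. \<Sum>j\<le>r - 2. \<Sum>k\<le>r - 2.
      x i * y j * z k * of_int (omega_basis r s i j k))"

definition vmult :: "nat \<Rightarrow> nat \<Rightarrow> (nat \<Rightarrow> rat) \<Rightarrow> (nat \<Rightarrow> rat) \<Rightarrow> (nat \<Rightarrow> rat)" where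
  "vmult r s x y = (THE p. p \<in> Vq r \<and> (\<forall>z\<in>Vq r. eta r s p z = omega r s x y z))"

definition vbasis :: "nat \<Rightarrow> (nat \<Rightarrow> rat)" where
  "vbasis i = (\<lambda>k. if k = i then 1 else 0)"

type_synonym pmat = "rat poly \<times> rat poly \<times> rat poly \<times> rat poly"  (* (a11,a12,a21,a22) *)

definition pmat_mult :: "pmat \<Rightarrow> pmat \<Rightarrow> pmat" where
  "pmat_mult A B = (case A of (a, b, c, d) \<Rightarrow> case B of (e, f, g, h) \<Rightarrow>
      (a * e + b * g, a * f + b * h, c * e + d * g, c * f + d * h))"

definition pmat_id :: pmat where "pmat_id = (1, 0, 0, 1)"

definition pmat_inv :: "pmat \<Rightarrow> pmat" where  (* inverse of a determinant-one matrix *)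
  "pmat_inv A = (case A of (a, b, c, d) \<Rightarrow> (d, - b, - c, a))"

definition pmat_pow_sign :: "pmat \<Rightarrow> int \<Rightarrow> pmat" where
  "pmat_pow_sign A e = (if e = 1 then A else if e = -1 then pmat_inv A else pmat_id)"

definition riley_factor :: "nat \<Rightarrow> nat \<Rightarrow> nat \<Rightarrow> pmat" where
  "riley_factor r s k = pmat_pow_sign
      (if odd k then (1, 1, 0, 1) else (1, 0, [:0, 1:], 1)) (eps r s k)"

fun pmat_prod :: "(nat \<Rightarrow> pmat) \<Rightarrow> nat \<Rightarrow> nat \<Rightarrow> pmat" where
  "pmat_prod A i 0 = pmat_id"
| "pmat_prod A i (Suc n) = pmat_mult (A i) (pmat_prod A (Suc i) n)"

definition riley :: "nat \<Rightarrow> nat \<Rightarrow> rat poly" where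
  "riley r s = fst (pmat_prod (riley_factor r s) 1 (r - 1))"

end

theory Submission
  imports Defs
begin

lemma sign_real_mult: "sign_real (x*y) = sign_real x * sign_real y"
  by (auto simp: sign_real_def zero_less_mult_iff mult_less_0_iff)
lemma sign_real_inverse: "sign_real (inverse y) = sign_real y"
  by (auto simp: sign_real_def)
lemma sign_real_divide: "sign_real (x/y) = sign_real x * sign_real y"
  by (simp add: divide_inverse sign_real_mult sign_real_inverse)
lemma sign_real_pm1: "sign_real ((-1)^n) = (-1)^n"
  by (cases "even n") (auto simp: sign_real_def)

locale knot = fixes r s :: nat
  assumes r3: "r \<ge> 3" and rodd: "odd r" and sodd: "odd s" and cop: "coprime r s"
    and spos: "0 < s" and slt: "s < r"
begin

definition th :: real where "th = pi * real s / real r"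

lemma th_pos: "0 < th" "th < pi"
  using spos slt r3 by (auto simp: th_def field_simps)

lemma sin_th: "sin th > 0" using th_pos by (simp add: sin_gt_zero)

lemma qroot_cis: "qroot r s = cis th"
  by (simp add: qroot_def cis_conv_exp th_def)

lemma cis_diff: "cis a - cis (-a) = complex_of_real (2 * sin a) * \<i>"
  by (simp add: complex_eq_iff)

lemma qint_sin: "qint r s n = sin (real n * th) / sin th"
proof -
  have "(qroot r s ^ n - inverse (qroot r s) ^ n) / (qroot r s - inverse (qroot r s))
     = complex_of_real (2 * sin (real n * th)) * \<i> / (complex_of_real (2 * sin th) * \<i>)"
  proof -
    have "inverse (cis th) ^ n = cis (-(real n * th))" by (simp add: DeMoivre)
    then show ?thesis by (simp add: qroot_cis DeMoivre cis_diff)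
  qed
  also have "\<dots> = complex_of_real (sin (real n * th) / sin th)"
    by (simp add: field_simps)
  finally show ?thesis by (simp add: qint_def)
qed

lemma sin_sign: assumes "1 \<le> n" "n \<le> r - 1"
  shows "sin (real n * th) = (-1) ^ (n * s div r) * sin (pi * real (n * s mod r) / real r)"
    and "sin (pi * real (n * s mod r) / real r) > 0"
proof -
  have rpos: "r > 0" using r3 by simp
  have ndvd: "\<not> r dvd n * s"
  proof
    assume "r dvd n * s"
    then have "r dvd n" using cop by (simp add: coprime_dvd_mult_left_iff)
    then show False using assms r3 by (auto dest: dvd_imp_le)
  qed
  define m where "m = n * s div r"
  define \<rho> where "\<rho> = n * s mod r"
  have ns: "n * s = m * r + \<rho>" by (simp add: m_def \<rho>_def)
  have rho: "0 < \<rho>" "\<rho> < r" using ndvd rpos by (auto simp: \<rho>_def dvd_eq_mod_eq_0)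
  have "real n * th = real m * pi + pi * real \<rho> / real r"
  proof -
    have "real n * th = pi * real (n*s) / real r" by (simp add: th_def)
    also have "\<dots> = pi * (real m * real r + real \<rho>) / real r" by (simp only: ns) simp
    also have "\<dots> = real m * pi + pi * real \<rho> / real r" using rpos by (simp add: field_simps)
    finally show ?thesis .
  qed
  then show "sin (real n * th) = (-1) ^ (n * s div r) * sin (pi * real (n * s mod r) / real r)"
    by (simp add: sin_add m_def \<rho>_def)
  show "sin (pi * real (n * s mod r) / real r) > 0"
    using rho rpos by (intro sin_gt_zero) (auto simp: \<rho>_def field_simps)
qed

definition e :: "nat \<Rightarrow> int" where "e n = eps r s n"
definition f :: "nat \<Rightarrow> nat" where "f n = n * s div r"

lemma qint_sign: assumes "1 \<le> n" "n \<le> r - 1"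
  shows "sign_real (qint r s n) = (-1) ^ f n" and "qint r s n \<noteq> 0"
proof -
  define X where "X = sin (pi * real (n * s mod r) / real r) / sin th"
  have q: "qint r s n = (-1) ^ f n * X"
    using sin_sign(1)[OF assms] unfolding X_def qint_sin f_def by simp
  have X: "X > 0" unfolding X_def using sin_sign(2)[OF assms] sin_th by simp
  show "sign_real (qint r s n) = (-1) ^ f n" unfolding q
    using X by (cases "even (f n)") (simp_all add: sign_real_def)
  show "qint r s n \<noteq> 0" unfolding q using X by simp
qed

lemma e_f: "1 \<le> n \<Longrightarrow> n \<le> r - 1 \<Longrightarrow> e n = (-1) ^ f n"
  using qint_sign by (simp add: e_def eps_def)

lemma e_pm: "1 \<le> n \<Longrightarrow> n \<le> r - 1 \<Longrightarrow> e n = 1 \<or> e n = -1"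
  using e_f by (metis neg_one_even_power neg_one_odd_power)

lemma e_sq: "1 \<le> n \<Longrightarrow> n \<le> r - 1 \<Longrightarrow> e n * e n = 1"
  using e_pm by fastforce

lemma e1: "e 1 = 1"
proof -
  have "f 1 = 0" using slt by (simp add: f_def)
  then show ?thesis using r3 e_f[of 1] by simp
qed

lemma f_carry: "f (x + y) = f x + f y \<or> f (x + y) = f x + f y + 1"
proof -
  have rpos: "r > 0" using r3 by simp
  have eq: "(x*s + y*s) div r = x*s div r + y*s div r + (x*s mod r + y*s mod r) div r"
    by (rule div_add1_eq)
  have "(x*s mod r + y*s mod r) div r < 2"
  proof (rule less_mult_imp_div_less)
    have "x*s mod r < r" "y*s mod r < r" using rpos by auto
    then show "x * s mod r + y * s mod r < 2 * r" by linarith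
  qed
  then have "(x*s mod r + y*s mod r) div r = 0 \<or> (x*s mod r + y*s mod r) div r = 1" by linarith
  moreover have "f (x + y) = (x*s + y*s) div r" by (simp add: f_def add_mult_distrib)
  ultimately show ?thesis using eq unfolding f_def by auto
qed

lemma f_sym: assumes "1 \<le> n" "n \<le> r - 1" shows "f n + f (r - n) + 1 = s"
proof -
  have rpos: "r > 0" using r3 by simp
  have ndvd: "\<not> r dvd n * s"
  proof
    assume "r dvd n * s"
    then have "r dvd n" using cop by (simp add: coprime_dvd_mult_left_iff)
    then show False using assms r3 by (auto dest: dvd_imp_le)
  qed
  define m where "m = n * s div r"
  define \<rho> where "\<rho> = n * s mod r"
  have ns: "n * s = m * r + \<rho>" by (simp add: m_def \<rho>_def)
  have rho: "0 < \<rho>" "\<rho> < r" using ndvd rpos by (auto simp: \<rho>_def dvd_eq_mod_eq_0)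
  have ms: "m < s"
  proof -
    have "m * r \<le> n * s" using ns by simp
    moreover have "n * s < r * s" using spos assms r3 by simp
    ultimately have "m * r < s * r" by (metis le_less_trans mult.commute)
    then show ?thesis by simp
  qed
  have "(r - n) * s = (s - m - 1) * r + (r - \<rho>)"
  proof -
    have "(r - n) * s = r * s - n * s" by (simp add: diff_mult_distrib)
    also have "\<dots> = (s - m - 1) * r + (r - \<rho>)"
    proof -
      have le: "(m+1)*r \<le> s*r" using ms by (intro mult_le_mono1) simp
      have "(s - m - 1) * r = s*r - (m+1)*r" by (simp add: diff_mult_distrib)
      then show ?thesis using ns rho le by (simp add: algebra_simps)
    qed
    finally show ?thesis .
  qed
  then have "f (r - n) = ((r - \<rho>) + (s - m - 1) * r) div r" by (simp add: f_def add.commute)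
  also have "\<dots> = s - m - 1" using rho rpos by (simp only: div_mult_self1) simp
  finally have "f (r - n) = s - m - 1" .
  then show ?thesis using ms by (simp add: f_def m_def)
qed

lemma e_sym: "1 \<le> n \<Longrightarrow> n \<le> r - 1 \<Longrightarrow> e (r - n) = e n"
proof -
  assume a: "1 \<le> n" "n \<le> r - 1"
  have "e (r - n) = (-1) ^ f (r - n)" using a by (intro e_f) auto
  moreover have "even (f n + f (r - n))" using f_sym[OF a] sodd by presburger
  ultimately show ?thesis using e_f[OF a]
    by (metis even_add neg_one_even_power neg_one_odd_power)
qed

end

context knot begin

definition Sg :: "nat \<Rightarrow> int" where "Sg n = (\<Prod>m\<in>{1..n}. e m)"

lemma Sg0[simp]: "Sg 0 = 1" by (simp add: Sg_def)
lemma Sg_Suc: "Sg (Suc n) = Sg n * e (Suc n)" by (simp add: Sg_def)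
lemma Sg_add1: "Sg (n + 1) = Sg n * e (n + 1)" using Sg_Suc by simp

lemma Sg_pm: "n \<le> r - 1 \<Longrightarrow> Sg n = 1 \<or> Sg n = -1"
proof (induction n)
  case 0 then show ?case by simp
next
  case (Suc n)
  then have "e (Suc n) = 1 \<or> e (Suc n) = -1" by (intro e_pm) auto
  with Suc show ?case by (auto simp: Sg_Suc)
qed

lemma Sg_sq: "n \<le> r - 1 \<Longrightarrow> Sg n * Sg n = 1" using Sg_pm by fastforce
lemma Sg_sq2: "n \<le> r - 1 \<Longrightarrow> Sg n * (Sg n * y) = y" using Sg_sq by (simp add: mult.assoc[symmetric])
lemma e_sq2: "1 \<le> n \<Longrightarrow> n \<le> r - 1 \<Longrightarrow> e n * (e n * y) = y" using e_sq by (simp add: mult.assoc[symmetric])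

lemma qfact_sign: "n \<le> r - 1 \<Longrightarrow> sign_real (qfact r s n) = Sg n \<and> qfact r s n \<noteq> 0"
proof (induction n)
  case 0 then show ?case by (simp add: qfact_def sign_real_def)
next
  case (Suc n)
  have q: "qfact r s (Suc n) = qfact r s n * qint r s (Suc n)" by (simp add: qfact_def)
  have "sign_real (qint r s (Suc n)) = e (Suc n)" "qint r s (Suc n) \<noteq> 0"
    using qint_sign[of "Suc n"] Suc.prems e_f[of "Suc n"] by auto
  with Suc show ?case by (simp add: q sign_real_mult Sg_Suc)
qed

definition Vf :: "nat \<Rightarrow> nat \<Rightarrow> nat \<Rightarrow> int" where
  "Vf i j k = (if i \<le> j + k \<and> j \<le> i + k \<and> k \<le> i + j \<and> even (i + j + k) \<and> i + j + k \<le> 2 * r - 4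
     then (-1) ^ ((i+j+k) div 2) * Sg ((i+j+k) div 2 + 1) * Sg ((i+j+k) div 2 - i)
          * Sg ((i+j+k) div 2 - j) * Sg ((i+j+k) div 2 - k) else 0)"

lemma V_abc: assumes "i = b + c" "j = a + c" "k = a + b"
  shows "Vf i j k = (if a + b + c \<le> r - 2 then (-1) ^ (a+b+c) * Sg (a+b+c+1) * Sg a * Sg b * Sg c else 0)"
proof -
  have h: "(i+j+k) div 2 = a + b + c" using assms by simp
  have "i + j + k \<le> 2 * r - 4 \<longleftrightarrow> a + b + c \<le> r - 2" using assms r3 by auto
  then show ?thesis unfolding Vf_def h using assms by (simp add: algebra_simps)
qed

lemma Vf_tri: "j + k < i \<or> i + k < j \<or> i + j < k \<Longrightarrow> Vf i j k = 0"
  by (auto simp: Vf_def)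
lemma Vf_odd: "odd (i + j + k) \<Longrightarrow> Vf i j k = 0"
  by (auto simp: Vf_def)
lemma Vf_big: "2 * r - 4 < i + j + k \<Longrightarrow> Vf i j k = 0"
  by (auto simp: Vf_def)

lemma adm_iff: "admissible r i j k \<longleftrightarrow> (i \<le> j + k \<and> j \<le> i + k \<and> k \<le> i + j \<and> even (i + j + k) \<and> i + j + k \<le> 2 * r - 4)"
  unfolding admissible_def by linarith

lemma even_diff2: "i \<le> j + k \<Longrightarrow> even (i + j + k) \<Longrightarrow> even (j + k - (i::nat))"
proof -
  assume a: "i \<le> j + k" "even (i + j + k)"
  have "j + k - i + 2 * i = i + j + k" using a by simp
  then show ?thesis using a by (metis even_add even_mult_iff even_numeral)
qed

lemma W_V: "omega_basis r s i j k = Sg i * Sg j * Sg k * Vf i j k"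
proof (cases "admissible r i j k")
  case False
  then have "Vf i j k = 0" unfolding adm_iff Vf_def by argo
  then show ?thesis using False by (simp add: omega_basis_def)
next
  case True
  then have adm: "i \<le> j + k" "j \<le> i + k" "k \<le> i + j" "even (i + j + k)" "i + j + k \<le> 2 * r - 4"
    unfolding adm_iff by auto
  define a where "a = (j + k - i) div 2"
  define b where "b = (i + k - j) div 2"
  define c where "c = (i + j - k) div 2"
  have "even (j + k - i)" using adm even_diff2 by blast
  then have 2: "2 * a = j + k - i" unfolding a_def by simp
  have "even (i + k - j)" using adm even_diff2[of j i k] by (simp add: ac_simps)
  then have 3: "2 * b = i + k - j" unfolding b_def by simp
  have "even (i + j - k)" using adm even_diff2[of k i j] by (simp add: ac_simps)
  then have 4: "2 * c = i + j - k" unfolding c_def by simp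
  have abc: "i = b + c" "j = a + c" "k = a + b" using 2 3 4 adm(1-3) by linarith+
  have sum: "a + b + c \<le> r - 2" using adm(5) abc r3 by linarith
  have th: "theta r s i j k = (-1) ^ (a + b + c) * (qfact r s (a + b + c + 1) * qfact r s a * qfact r s b * qfact r s c)
       / (qfact r s (a + b) * qfact r s (a + c) * qfact r s (b + c))"
    unfolding theta_def Let_def a_def[symmetric] b_def[symmetric] c_def[symmetric] ..
  have lim: "a + b + c + 1 \<le> r - 1" "a \<le> r - 1" "b \<le> r - 1" "c \<le> r - 1"
     "a + b \<le> r - 1" "a + c \<le> r - 1" "b + c \<le> r - 1" using sum r3 by linarith+
  have "sign_real (theta r s i j k) = (-1) ^ (a + b + c) * Sg (a+b+c+1) * Sg a * Sg b * Sg c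
     * Sg (a+b) * Sg (a+c) * Sg (b+c)"
    unfolding th sign_real_divide sign_real_mult sign_real_pm1
    using qfact_sign[OF lim(1)] qfact_sign[OF lim(2)] qfact_sign[OF lim(3)] qfact_sign[OF lim(4)]
      qfact_sign[OF lim(5)] qfact_sign[OF lim(6)] qfact_sign[OF lim(7)]
    by (simp only:)
  moreover have "Vf i j k = (-1) ^ (a+b+c) * Sg (a+b+c+1) * Sg a * Sg b * Sg c"
    using V_abc[OF abc] sum by simp
  ultimately show ?thesis using True abc by (simp add: omega_basis_def mult_ac)
qed
end

context knot begin

lemma pm1_cases: "(-1::int) ^ n = 1 \<or> (-1::int) ^ n = -1"
  by (metis neg_one_even_power neg_one_odd_power)

lemma f_carry2: "\<exists>c. f (x+y) = f x + f y + c \<and> (c = 0 \<or> c = 1)"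
  using f_carry[of x y] by (metis add.right_neutral)

lemma carry: assumes "1 \<le> x" "1 \<le> y" "1 \<le> z" "x + y + z \<le> r - 1"
  shows "e (x+y) * (e (x+y+z) * e x * e y + e z) = e (x+z) * (e (x+y+z) * e x * e z + e y)"
proof -
  obtain c1 where c1: "f (x+y) = f x + f y + c1" "c1 = 0 \<or> c1 = 1" using f_carry2[of x y] by blast
  obtain c2 where c2: "f (x+y+z) = f (x+y) + f z + c2" "c2 = 0 \<or> c2 = 1" using f_carry2[of "x+y" z] by blast
  obtain c3 where c3: "f (x+z) = f x + f z + c3" "c3 = 0 \<or> c3 = 1" using f_carry2[of x z] by blast
  obtain c4 where c4: "f (x+y+z) = f (x+z) + f y + c4" "c4 = 0 \<or> c4 = 1"
    using f_carry2[of "x+z" y] by (auto simp: ac_simps)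
  have sum: "c1 + c2 = c3 + c4" using c1 c2 c3 c4 by linarith
  have E: "e (x+y) = (-1)^f x * (-1)^f y * (-1)^c1" "e (x+z) = (-1)^f x * (-1)^f z * (-1)^c3"
    "e (x+y+z) = (-1)^f x * (-1)^f y * (-1)^c1 * (-1)^f z * (-1)^c2"
    "e x = (-1)^f x" "e y = (-1)^f y" "e z = (-1)^f z"
    using assms by (subst e_f; simp add: c1 c2 c3 power_add)+
  show ?thesis unfolding E
    using pm1_cases[of "f x"] pm1_cases[of "f y"] pm1_cases[of "f z"] c1(2) c2(2) c3(2) c4(2) sum
    by auto
qed


definition CoreP :: "nat \<Rightarrow> nat \<Rightarrow> nat \<Rightarrow> bool" where
  "CoreP i j k \<longleftrightarrow> e (k+1) * (Vf i j (k+1) - (if 1 \<le> k then Vf i j (k-1) else 0))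
     = e (j+1) * (Vf i (j+1) k - (if 1 \<le> j then Vf i (j-1) k else 0))"

lemma Core_gen: assumes ijk: "i = b+c+1" "j = a+c+1" "k = a+b+1" and lim: "a+b+c+2 \<le> r-2"
  shows "CoreP i j k"
proof -
  define n where "n = a + b + c"
  have V1: "Vf i j (k+1) = (-1)^(n+2) * Sg (n+3) * Sg (a+1) * Sg (b+1) * Sg c"
    using V_abc[of i "b+1" c j "a+1" "k+1"] ijk lim by (simp add: n_def ac_simps eval_nat_numeral)
  have V2: "Vf i j (k-1) = (-1)^(n+1) * Sg (n+2) * Sg a * Sg b * Sg (c+1)"
    using V_abc[of i b "c+1" j a "k-1"] ijk lim by (simp add: n_def ac_simps eval_nat_numeral)
  have V3: "Vf i (j+1) k = (-1)^(n+2) * Sg (n+3) * Sg (a+1) * Sg b * Sg (c+1)"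
    using V_abc[of i b "c+1" "j+1" "a+1" k] ijk lim by (simp add: n_def ac_simps eval_nat_numeral)
  have V4: "Vf i (j-1) k = (-1)^(n+1) * Sg (n+2) * Sg a * Sg (b+1) * Sg c"
    using V_abc[of i "b+1" c "j-1" a k] ijk lim by (simp add: n_def ac_simps eval_nat_numeral)
  have S: "Sg (n+3) = Sg (n+2) * e (n+3)" "Sg (a+1) = Sg a * e (a+1)" "Sg (b+1) = Sg b * e (b+1)"
    "Sg (c+1) = Sg c * e (c+1)"
    using Sg_add1[of "n+2"] Sg_add1[of a] Sg_add1[of b] Sg_add1[of c] by (simp_all add: ac_simps eval_nat_numeral)
  have pw: "(-1::int) ^ (n+2) = - ((-1) ^ (n+1))" by simp
  define G where "G = (-1::int)^(n+1) * Sg (n+2) * Sg a * Sg b * Sg c"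
  have K: "e (a+b+2) * (e (n+3) * e (a+1) * e (b+1) + e (c+1)) = e (a+c+2) * (e (n+3) * e (a+1) * e (c+1) + e (b+1))"
    using carry[of "a+1" "b+1" "c+1"] lim r3 by (simp add: n_def ac_simps eval_nat_numeral)
  have L: "e (k+1) * (Vf i j (k+1) - (if 1 \<le> k then Vf i j (k-1) else 0))
      = - G * (e (a+b+2) * (e (n+3) * e (a+1) * e (b+1) + e (c+1)))"
    unfolding V1 V2 S pw G_def using ijk by (simp add: algebra_simps)
  have R: "e (j+1) * (Vf i (j+1) k - (if 1 \<le> j then Vf i (j-1) k else 0))
      = - G * (e (a+c+2) * (e (n+3) * e (a+1) * e (c+1) + e (b+1)))"
    unfolding V3 V4 S pw G_def using ijk by (simp add: algebra_simps)
  show ?thesis unfolding CoreP_def L R K ..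
qed


lemma Core_top: assumes ijk: "i = b+c+1" "j = a+c+1" "k = a+b+1" and lim: "a+b+c+3 = r"
  shows "CoreP i j k"
proof -
  define n where "n = a + b + c"
  have V1: "Vf i j (k+1) = 0"
    using V_abc[of i "b+1" c j "a+1" "k+1"] ijk lim by (simp add: n_def ac_simps eval_nat_numeral)
  have V2: "Vf i j (k-1) = (-1)^(n+1) * Sg (n+2) * Sg a * Sg b * Sg (c+1)"
    using V_abc[of i b "c+1" j a "k-1"] ijk lim by (simp add: n_def ac_simps eval_nat_numeral)
  have V3: "Vf i (j+1) k = 0"
    using V_abc[of i b "c+1" "j+1" "a+1" k] ijk lim by (simp add: n_def ac_simps eval_nat_numeral)
  have V4: "Vf i (j-1) k = (-1)^(n+1) * Sg (n+2) * Sg a * Sg (b+1) * Sg c"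
    using V_abc[of i "b+1" c "j-1" a k] ijk lim by (simp add: n_def ac_simps eval_nat_numeral)
  have S: "Sg (b+1) = Sg b * e (b+1)" "Sg (c+1) = Sg c * e (c+1)"
    using Sg_add1[of b] Sg_add1[of c] by (simp_all add: ac_simps)
  have "r - (c+1) = a+b+2" "r - (b+1) = a+c+2" using lim by auto
  then have sym1: "e (a+b+2) = e (c+1)" and sym2: "e (a+c+2) = e (b+1)"
    using e_sym[of "c+1"] e_sym[of "b+1"] lim by auto
  have sq: "e (c+1) * e (c+1) = 1" "e (b+1) * e (b+1) = 1" using e_sq lim by auto
  define G where "G = (-1::int)^(n+1) * Sg (n+2) * Sg a * Sg b * Sg c"
  have L: "e (k+1) * (Vf i j (k+1) - (if 1 \<le> k then Vf i j (k-1) else 0)) = - G * (e (c+1) * e (c+1))"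
    unfolding V1 V2 S G_def using ijk sym1 by (simp add: algebra_simps)
  have R: "e (j+1) * (Vf i (j+1) k - (if 1 \<le> j then Vf i (j-1) k else 0)) = - G * (e (b+1) * e (b+1))"
    unfolding V3 V4 S G_def using ijk sym2 by (simp add: algebra_simps)
  show ?thesis unfolding CoreP_def L R sq ..
qed

lemma Core_big: assumes ijk: "i = b+c+1" "j = a+c+1" "k = a+b+1" and lim: "r \<le> a+b+c+2"
  shows "CoreP i j k"
proof -
  have "Vf i j (k+1) = 0" "Vf i j (k-1) = 0" "Vf i (j+1) k = 0" "Vf i (j-1) k = 0"
    using V_abc[of i "b+1" c j "a+1" "k+1"] V_abc[of i b "c+1" j a "k-1"]
      V_abc[of i b "c+1" "j+1" "a+1" k] V_abc[of i "b+1" c "j-1" a k] ijk lim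
    by (simp_all add: ac_simps)
  then show ?thesis by (simp add: CoreP_def)
qed

lemma Core_C0: assumes ijk: "i = b" "j = a" "k = a+b+1" and lim: "k \<le> r - 2"
  shows "CoreP i j k"
proof -
  have V1: "Vf i j (k+1) = 0" using ijk by (intro Vf_tri) arith
  have V2: "Vf i j (k-1) = (-1)^(a+b) * Sg (a+b+1) * Sg a * Sg b"
    using V_abc[of i b 0 j a "k-1"] ijk lim by (simp add: ac_simps)
  have V3: "Vf i (j+1) k = (-1)^(a+b+1) * Sg (a+b+2) * Sg (a+1) * Sg b"
    using V_abc[of i b 0 "j+1" "a+1" k] ijk lim by (simp add: ac_simps eval_nat_numeral)
  have V4: "Vf i (j-1) k = 0" using ijk by (intro Vf_tri) arith
  have S: "Sg (a+b+2) = Sg (a+b+1) * e (a+b+2)" "Sg (a+1) = Sg a * e (a+1)"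
    using Sg_add1[of "a+b+1"] Sg_add1[of a] by (simp_all add: ac_simps eval_nat_numeral)
  have sq: "e (a+1) * e (a+1) = 1" using e_sq lim ijk by auto
  have L: "e (k+1) * (Vf i j (k+1) - (if 1 \<le> k then Vf i j (k-1) else 0)) =
     - ((-1)^(a+b) * Sg (a+b+1) * Sg a * Sg b * e (a+b+2))"
    unfolding V1 V2 using ijk by (simp add: algebra_simps eval_nat_numeral)
  have R: "e (j+1) * (Vf i (j+1) k - (if 1 \<le> j then Vf i (j-1) k else 0)) =
     - ((-1)^(a+b) * Sg (a+b+1) * Sg a * Sg b * e (a+b+2)) * (e (a+1) * e (a+1))"
    unfolding V3 V4 S using ijk by (simp add: algebra_simps)
  show ?thesis unfolding CoreP_def L R sq by simp
qed

lemma Core_B0: assumes ijk: "i = c" "j = a+c+1" "k = a" and lim: "j \<le> r - 2"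
  shows "CoreP i j k"
proof -
  have V1: "Vf i j (k+1) = (-1)^(a+c+1) * Sg (a+c+2) * Sg (a+1) * Sg c"
    using V_abc[of i 0 c j "a+1" "k+1"] ijk lim by (simp add: ac_simps eval_nat_numeral)
  have V2: "(if 1 \<le> k then Vf i j (k-1) else 0) = 0" using ijk by (auto intro: Vf_tri)
  have V3: "Vf i (j+1) k = 0" using ijk by (intro Vf_tri) arith
  have V4: "Vf i (j-1) k = (-1)^(a+c) * Sg (a+c+1) * Sg a * Sg c"
    using V_abc[of i 0 c "j-1" a k] ijk lim by (simp add: ac_simps)
  have S: "Sg (a+c+2) = Sg (a+c+1) * e (a+c+2)" "Sg (a+1) = Sg a * e (a+1)"
    using Sg_add1[of "a+c+1"] Sg_add1[of a] by (simp_all add: ac_simps eval_nat_numeral)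
  have sq: "e (a+1) * e (a+1) = 1" using e_sq lim ijk by auto
  have L: "e (k+1) * (Vf i j (k+1) - (if 1 \<le> k then Vf i j (k-1) else 0)) =
     - ((-1)^(a+c) * Sg (a+c+1) * Sg a * Sg c * e (a+c+2)) * (e (a+1) * e (a+1))"
    unfolding V1 V2 S using ijk by (simp add: algebra_simps)
  have R: "e (j+1) * (Vf i (j+1) k - (if 1 \<le> j then Vf i (j-1) k else 0)) =
     - ((-1)^(a+c) * Sg (a+c+1) * Sg a * Sg c * e (a+c+2))"
    unfolding V3 V4 using ijk by (simp add: algebra_simps eval_nat_numeral)
  show ?thesis unfolding CoreP_def L R sq by simp
qed

lemma Core_A0: assumes ijk: "i = b+c+1" "j = c" "k = b" and lim: "i \<le> r - 2"
  shows "CoreP i j k"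
proof -
  have V1: "Vf i j (k+1) = (-1)^(b+c+1) * Sg (b+c+2) * Sg (b+1) * Sg c"
    using V_abc[of i "b+1" c j 0 "k+1"] ijk lim by (simp add: ac_simps eval_nat_numeral)
  have V2: "(if 1 \<le> k then Vf i j (k-1) else 0) = 0" using ijk by (auto intro: Vf_tri)
  have V3: "Vf i (j+1) k = (-1)^(b+c+1) * Sg (b+c+2) * Sg b * Sg (c+1)"
    using V_abc[of i b "c+1" "j+1" 0 k] ijk lim by (simp add: ac_simps eval_nat_numeral)
  have V4: "(if 1 \<le> j then Vf i (j-1) k else 0) = 0" using ijk by (auto intro: Vf_tri)
  have S: "Sg (b+1) = Sg b * e (b+1)" "Sg (c+1) = Sg c * e (c+1)"
    using Sg_add1[of b] Sg_add1[of c] by (simp_all add: ac_simps)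
  have sq: "e (b+1) * e (b+1) = 1" "e (c+1) * e (c+1) = 1" using e_sq lim ijk by auto
  have L: "e (k+1) * (Vf i j (k+1) - (if 1 \<le> k then Vf i j (k-1) else 0)) =
     ((-1)^(b+c+1) * Sg (b+c+2) * Sg b * Sg c) * (e (b+1) * e (b+1))"
    unfolding V1 V2 S using ijk by (simp add: algebra_simps)
  have R: "e (j+1) * (Vf i (j+1) k - (if 1 \<le> j then Vf i (j-1) k else 0)) =
     ((-1)^(b+c+1) * Sg (b+c+2) * Sg b * Sg c) * (e (c+1) * e (c+1))"
    unfolding V3 V4 S using ijk by (simp add: algebra_simps)
  show ?thesis unfolding CoreP_def L R sq by simp
qed


lemma Core: assumes lim: "i \<le> r - 2" "j \<le> r - 2" "k \<le> r - 2"
  shows "CoreP i j k"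
proof (cases "even (i + j + k)")
  case True
  then have "Vf i j (k+1) = 0" "Vf i (j+1) k = 0" by (auto intro!: Vf_odd)
  moreover have "(if 1 \<le> k then Vf i j (k-1) else 0) = 0" "(if 1 \<le> j then Vf i (j-1) k else 0) = 0"
    using True by (auto intro!: Vf_odd)
  ultimately show ?thesis unfolding CoreP_def by simp
next
  case odd: False
  show ?thesis
  proof (cases "j + k + 1 < i \<or> i + k + 1 < j \<or> i + j + 1 < k")
    case True
    then have "Vf i j (k+1) = 0" "Vf i (j+1) k = 0" by (auto intro!: Vf_tri)
    moreover have "(if 1 \<le> k then Vf i j (k-1) else 0) = 0" "(if 1 \<le> j then Vf i (j-1) k else 0) = 0"
      using True by (auto intro!: Vf_tri)
    ultimately show ?thesis unfolding CoreP_def by simp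
  next
    case False
    then have tri: "i \<le> j + (k+1)" "j \<le> i + (k+1)" "k \<le> i + (j + 1)" by auto
    have ev: "even (i + j + (k+1))" using odd by simp
    define A where "A = (j + (k+1) - i) div 2"
    define B where "B = (i + (k+1) - j) div 2"
    define C where "C = (i + (j + 1) - k) div 2"
    have "even (j + (k+1) - i)" using even_diff2[of i j "k+1"] tri ev by simp
    then have 2: "2 * A = j + (k+1) - i" unfolding A_def by simp
    have "even (i + (k+1) - j)" using even_diff2[of j i "k+1"] tri ev by (simp add: ac_simps)
    then have 3: "2 * B = i + (k+1) - j" unfolding B_def by simp
    have "even (i + (j + 1) - k)" using even_diff2[of k i "j+1"] tri ev by (simp add: ac_simps)
    then have 4: "2 * C = i + (j + 1) - k" unfolding C_def by simp
    have ABC: "B + C = i + 1" "A + C = j + 1" "A + B = k + 1" using 2 3 4 tri by linarith+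
    show ?thesis
    proof (cases "C = 0")
      case True
      then show ?thesis using ABC lim by (intro Core_C0[of i i j j]) auto
    next
      case C: False
      show ?thesis
      proof (cases "B = 0")
        case True
        then show ?thesis using ABC lim by (intro Core_B0[of i i j k]) auto
      next
        case B: False
        show ?thesis
        proof (cases "A = 0")
          case True
          then show ?thesis using ABC lim by (intro Core_A0[of i k j]) auto
        next
          case A: False
          define a where "a = A - 1"
          define b where "b = B - 1"
          define c where "c = C - 1"
          have ijk: "i = b+c+1" "j = a+c+1" "k = a+b+1" using ABC A B C unfolding a_def b_def c_def by auto
          consider "a+b+c+2 \<le> r-2" | "a+b+c+3 = r" | "r \<le> a+b+c+2" by linarith
          then show ?thesis
          proof cases
            case 1 then show ?thesis by (rule Core_gen[OF ijk])
          next
            case 2 then show ?thesis by (rule Core_top[OF ijk])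
          next
            case 3 then show ?thesis by (rule Core_big[OF ijk])
          qed
        qed
      qed
    qed
  qed
qed

end

lemma reidx1: "(\<Sum>j\<le>(N::nat). (if 1 \<le> j then v (j-1) else 0) * g j) = (\<Sum>j\<le>N. v j * (if j+1 \<le> N then g (j+1) else 0 :: 'a::comm_ring_1))"
proof (cases N)
  case 0 then show ?thesis by simp
next
  case (Suc M)
  have "(\<Sum>j\<le>(N::nat). (if 1 \<le> j then v (j-1) else 0) * g j) = (\<Sum>i\<le>M. v i * g (Suc i))"
    unfolding Suc sum.atMost_Suc_shift by simp
  moreover have "(\<Sum>j\<le>N. v j * (if j+1 \<le> N then g (j+1) else 0)) = (\<Sum>i\<le>M. v i * g (Suc i))"
  proof -
    have "(\<Sum>j\<le>M. v j * (if j+1 \<le> Suc M then g (j+1) else 0)) = (\<Sum>i\<le>M. v i * g (Suc i))"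
      by (intro sum.cong refl) auto
    then show ?thesis unfolding Suc sum.atMost_Suc by simp
  qed
  ultimately show ?thesis by simp
qed

lemma reidx2: "(\<Sum>j\<le>(N::nat). (if j+1 \<le> N then v (j+1) else 0) * g j) = (\<Sum>j\<le>N. v j * (if 1 \<le> j then g (j-1) else 0 :: 'a::comm_ring_1))"
proof (cases N)
  case 0 then show ?thesis by simp
next
  case (Suc M)
  have "(\<Sum>j\<le>(N::nat). (if j+1 \<le> N then v (j+1) else 0) * g j) = (\<Sum>i\<le>M. v (Suc i) * g i)"
  proof -
    have "(\<Sum>j\<le>M. (if j+1 \<le> Suc M then v (j+1) else 0) * g j) = (\<Sum>i\<le>M. v (Suc i) * g i)"
      by (intro sum.cong refl) auto
    then show ?thesis unfolding Suc sum.atMost_Suc by simp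
  qed
  moreover have "(\<Sum>j\<le>N. v j * (if 1 \<le> j then g (j-1) else 0)) = (\<Sum>i\<le>M. v (Suc i) * g i)"
    unfolding Suc sum.atMost_Suc_shift by simp
  ultimately show ?thesis by simp
qed

context knot begin

definition eta_d :: "nat \<Rightarrow> int" where "eta_d k = (-1) ^ k * e (k + 1)"

lemma eta_diag_eq: "eta_diag r s k = eta_d k" by (simp add: eta_diag_def eta_d_def e_def)

lemma eta_sq: "k \<le> r - 2 \<Longrightarrow> eta_d k * eta_d k = 1"
proof -
  assume "k \<le> r - 2"
  then have "e (k+1) * e (k+1) = 1" using e_sq r3 by auto
  then show ?thesis unfolding eta_d_def by (simp add: algebra_simps flip: power_add)
qed

definition mc :: "nat \<Rightarrow> nat \<Rightarrow> nat \<Rightarrow> rat" where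
  "mc i j k = of_int (eta_d k * (Sg i * Sg j * Sg k * Vf i j k))"

definition vm :: "(nat \<Rightarrow> rat) \<Rightarrow> (nat \<Rightarrow> rat) \<Rightarrow> nat \<Rightarrow> rat" where
  "vm x y = (\<lambda>k. if k \<le> r - 2 then (\<Sum>i\<le>r-2. \<Sum>j\<le>r-2. x i * y j * mc i j k) else 0)"

lemma vm_Vq: "vm x y \<in> Vq r" by (simp add: vm_def Vq_def)

lemma omega_sum: "omega r s x y z = (\<Sum>k\<le>r-2. z k * (\<Sum>i\<le>r-2. \<Sum>j\<le>r-2. x i * y j * of_int (omega_basis r s i j k)))"
proof -
  have "omega r s x y z = (\<Sum>i\<le>r-2. \<Sum>k\<le>r-2. \<Sum>j\<le>r-2. x i * y j * z k * of_int (omega_basis r s i j k))"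
    unfolding omega_def by (rule sum.cong[OF refl], rule sum.swap)
  also have "\<dots> = (\<Sum>k\<le>r-2. \<Sum>i\<le>r-2. \<Sum>j\<le>r-2. x i * y j * z k * of_int (omega_basis r s i j k))"
    by (rule sum.swap)
  also have "\<dots> = (\<Sum>k\<le>r-2. z k * (\<Sum>i\<le>r-2. \<Sum>j\<le>r-2. x i * y j * of_int (omega_basis r s i j k)))"
    by (intro sum.cong refl) (simp add: sum_distrib_left mult_ac)
  finally show ?thesis .
qed

lemma mc_W: "mc i j k = of_int (eta_d k) * of_int (omega_basis r s i j k)"
  by (simp add: mc_def W_V)

lemma vm_alt: "k \<le> r - 2 \<Longrightarrow> vm x y k = of_int (eta_d k) * (\<Sum>i\<le>r-2. \<Sum>j\<le>r-2. x i * y j * of_int (omega_basis r s i j k))"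
proof -
  assume k: "k \<le> r - 2"
  have "(\<Sum>i\<le>r-2. \<Sum>j\<le>r-2. x i * y j * mc i j k) = (\<Sum>i\<le>r-2. \<Sum>j\<le>r-2. of_int (eta_d k) * (x i * y j * of_int (omega_basis r s i j k)))"
    by (intro sum.cong refl) (simp add: mc_W)
  also have "\<dots> = of_int (eta_d k) * (\<Sum>i\<le>r-2. \<Sum>j\<le>r-2. x i * y j * of_int (omega_basis r s i j k))"
    by (simp only: sum_distrib_left)
  finally show ?thesis using k by (simp add: vm_def)
qed

lemma sum_vbasis: "k \<le> N \<Longrightarrow> (\<Sum>k'\<le>N. vbasis k k' * g k') = g k"
proof -
  assume "k \<le> N"
  have "(\<Sum>k'\<le>N. vbasis k k' * g k') = (\<Sum>k'\<le>N. if k' = k then g k else 0)"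
    by (intro sum.cong refl) (auto simp: vbasis_def)
  then show ?thesis using \<open>k \<le> N\<close> by simp
qed

lemma vmult_eq: "vmult r s x y = vm x y"
  unfolding vmult_def
proof (rule the_equality)
  show "vm x y \<in> Vq r \<and> (\<forall>z\<in>Vq r. eta r s (vm x y) z = omega r s x y z)"
  proof (intro conjI ballI vm_Vq)
    fix z
    show "eta r s (vm x y) z = omega r s x y z"
      unfolding eta_def omega_sum
    proof (rule sum.cong[OF refl])
      fix k assume k: "k \<in> {..r-2}"
      define S where "S = (\<Sum>i\<le>r-2. \<Sum>j\<le>r-2. x i * y j * of_int (omega_basis r s i j k) :: rat)"
      have "of_int (eta_d k) * of_int (eta_d k) = (1::rat)"
        using eta_sq[of k] k by (simp flip: of_int_mult)
      moreover have "vm x y k = of_int (eta_d k) * S" using k vm_alt by (simp add: S_def)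
      ultimately show "vm x y k * z k * of_int (eta_diag r s k) = z k * S"
        unfolding eta_diag_eq by (simp add: algebra_simps)
    qed
  qed
next
  fix p assume p: "p \<in> Vq r \<and> (\<forall>z\<in>Vq r. eta r s p z = omega r s x y z)"
  show "p = vm x y"
  proof
    fix k
    show "p k = vm x y k"
    proof (cases "k \<le> r - 2")
      case False then show ?thesis using p by (simp add: Vq_def vm_def)
    next
      case True
      define S where "S = (\<Sum>i\<le>r-2. \<Sum>j\<le>r-2. x i * y j * of_int (omega_basis r s i j k) :: rat)"
      have vb: "vbasis k \<in> Vq r" using True by (simp add: Vq_def vbasis_def)
      have "eta r s p (vbasis k) = (\<Sum>k'\<le>r-2. vbasis k k' * (p k' * of_int (eta_diag r s k')))"
        unfolding eta_def by (simp add: mult_ac)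
      also have "\<dots> = p k * of_int (eta_d k)" using True by (simp only: sum_vbasis eta_diag_eq)
      finally have 1: "eta r s p (vbasis k) = p k * of_int (eta_d k)" .
      have 2: "omega r s x y (vbasis k) = S"
        using True unfolding omega_sum S_def by (rule sum_vbasis)
      have eq: "p k * of_int (eta_d k) = S"
        using p vb 1 2 by auto
      have sq: "of_int (eta_d k) * of_int (eta_d k) = (1::rat)"
        using eta_sq[OF True] by (simp flip: of_int_mult)
      have "p k = (p k * of_int (eta_d k)) * of_int (eta_d k)" using sq by (simp add: mult.assoc)
      also have "\<dots> = vm x y k" unfolding eq using True vm_alt[OF True] by (simp add: S_def mult.commute)
      finally show ?thesis .
    qed
  qed
qed

end

context knot begin

lemma Vf_comm: "Vf i j k = Vf j i k"
proof -
  have h: "j + i + k = i + j + k" by simp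
  show ?thesis unfolding Vf_def h
    apply (rule if_cong)
      apply (simp only: add.commute[of j i]) apply blast
     apply (simp only: mult_ac)
    apply (rule refl)
    done
qed

lemma mc_comm: "mc i j k = mc j i k"
  unfolding mc_def Vf_comm[of i j k] by (simp only: mult_ac)

lemma mc_comm': "x * y * mc i j k = y * x * mc j i k"
  unfolding mc_comm[of i j k] by (simp only: mult_ac)

lemma vm_comm: "vm x y = vm y x"
proof
  fix k
  have "(\<Sum>i\<le>r-2. \<Sum>j\<le>r-2. x i * y j * mc i j k) = (\<Sum>j\<le>r-2. \<Sum>i\<le>r-2. x i * y j * mc i j k)"
    by (rule sum.swap)
  also have "\<dots> = (\<Sum>j\<le>r-2. \<Sum>i\<le>r-2. y j * x i * mc j i k)"
    by (intro sum.cong refl) (rule mc_comm')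
  finally show "vm x y k = vm y x k" by (simp add: vm_def)
qed

lemma Vf_top1: "Vf i j (r - 1) = 0"
proof -
  have "\<not> (r - 1 \<le> i + j \<and> i + j + (r - 1) \<le> 2 * r - 4)" using r3 by linarith
  then show ?thesis unfolding Vf_def by (intro if_not_P) blast
qed
lemma Vf_top2: "Vf i (r - 1) k = 0"
proof -
  have "\<not> (r - 1 \<le> i + k \<and> i + (r - 1) + k \<le> 2 * r - 4)" using r3 by linarith
  then show ?thesis unfolding Vf_def by (intro if_not_P) blast
qed

lemma assoc_int: assumes lim: "i \<le> r - 2" "j \<le> r - 2" "k \<le> r - 2"
  shows "(if 1 \<le> k then eta_d (k-1) * (Sg i * Sg j * Sg (k-1) * Vf i j (k-1)) else 0)
        - (if k+1 \<le> r-2 then e (k+1) * e (k+2) * (eta_d (k+1) * (Sg i * Sg j * Sg (k+1) * Vf i j (k+1))) else 0)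
       = (if j+1 \<le> r-2 then eta_d k * (Sg i * Sg (j+1) * Sg k * Vf i (j+1) k) else 0)
        - (if 1 \<le> j then e j * e (j+1) * (eta_d k * (Sg i * Sg (j-1) * Sg k * Vf i (j-1) k)) else 0)"
proof -
  define P where "P = Sg i * Sg j"
  define Q where "Q = (-1) ^ k * P * Sg k"
  define V1 where "V1 = Vf i j (k+1)"
  define V2 where "V2 = (if 1 \<le> k then Vf i j (k-1) else 0)"
  define V3 where "V3 = Vf i (j+1) k"
  define V4 where "V4 = (if 1 \<le> j then Vf i (j-1) k else 0)"
  have C: "e (k+1) * (V1 - V2) = e (j+1) * (V3 - V4)"
    using Core[OF lim] unfolding CoreP_def V1_def V2_def V3_def V4_def .
  have ek: "e (k+1) * e (k+1) = 1" using e_sq lim r3 by auto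
  have lhs1: "(if 1 \<le> k then eta_d (k-1) * (Sg i * Sg j * Sg (k-1) * Vf i j (k-1)) else 0) = - Q * V2"
  proof (cases "1 \<le> k")
    case True
    have "Sg k = Sg (k-1) * e k" using Sg_Suc[of "k-1"] True by simp
    moreover have "(-1::int) ^ k = - ((-1) ^ (k-1))" using True
      by (metis Suc_diff_1 less_le_trans mult_minus1 power_Suc zero_less_one)
    ultimately show ?thesis using True unfolding Q_def V2_def P_def eta_d_def by (simp add: algebra_simps)
  qed (simp add: V2_def)
  have lhs2: "(if k+1 \<le> r-2 then e (k+1) * e (k+2) * (eta_d (k+1) * (Sg i * Sg j * Sg (k+1) * Vf i j (k+1))) else 0)
     = - Q * V1"
  proof (cases "k+1 \<le> r-2")
    case True
    have "e (k+2) * e (k+2) = 1" using e_sq True r3 by auto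
    moreover have "Sg (k+1) = Sg k * e (k+1)" using Sg_add1 by simp
    moreover have "e (k+1+1) = e (k+2)" by simp
    ultimately show ?thesis using True ek unfolding Q_def V1_def P_def eta_d_def
      by (simp add: algebra_simps)
  next
    case False
    then have "k + 1 = r - 1" using lim r3 by auto
    then have "V1 = 0" unfolding V1_def using Vf_top1 by simp
    then show ?thesis using False by simp
  qed
  have rhs1: "(if j+1 \<le> r-2 then eta_d k * (Sg i * Sg (j+1) * Sg k * Vf i (j+1) k) else 0)
      = Q * e (k+1) * e (j+1) * V3"
  proof (cases "j+1 \<le> r-2")
    case True
    have "Sg (j+1) = Sg j * e (j+1)" using Sg_add1 by simp
    then show ?thesis using True unfolding Q_def V3_def P_def eta_d_def by (simp add: algebra_simps)
  next
    case False
    then have "j + 1 = r - 1" using lim r3 by auto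
    then have "V3 = 0" unfolding V3_def using Vf_top2 by simp
    then show ?thesis using False by simp
  qed
  have rhs2: "(if 1 \<le> j then e j * e (j+1) * (eta_d k * (Sg i * Sg (j-1) * Sg k * Vf i (j-1) k)) else 0)
      = Q * e (k+1) * e (j+1) * V4"
  proof (cases "1 \<le> j")
    case True
    have "Sg j = Sg (j-1) * e j" using Sg_Suc[of "j-1"] True by simp
    moreover have "e j * e j = 1" using e_sq True lim r3 by auto
    ultimately show ?thesis using True unfolding Q_def V4_def P_def eta_d_def
      by (simp add: algebra_simps)
  qed (simp add: V4_def)
  have "- Q * V2 - - Q * V1 = Q * ((e (k+1) * e (k+1)) * (V1 - V2))" using ek by (simp add: algebra_simps)
  also have "\<dots> = Q * e (k+1) * (e (k+1) * (V1 - V2))" by (simp add: algebra_simps)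
  also have "\<dots> = Q * e (k+1) * e (j+1) * V3 - Q * e (k+1) * e (j+1) * V4" unfolding C by (simp add: algebra_simps)
  finally show ?thesis unfolding lhs1 lhs2 rhs1 rhs2 .
qed


lemma assoc_mc: assumes lim: "i \<le> r - 2" "j \<le> r - 2" "k \<le> r - 2"
  shows "(if 1 \<le> k then mc i j (k-1) else 0) - (if k+1 \<le> r-2 then of_int (e (k+1) * e (k+2)) * mc i j (k+1) else 0)
       = (if j+1 \<le> r-2 then mc i (j+1) k else 0) - (if 1 \<le> j then of_int (e j * e (j+1)) * mc i (j-1) k else 0)"
proof -
  note A = arg_cong[OF assoc_int[OF lim], of "of_int :: int \<Rightarrow> rat"]
  show ?thesis using A
    by (cases "1 \<le> k"; cases "k+1 \<le> r-2"; cases "j+1 \<le> r-2"; cases "1 \<le> j"; simp add: mc_def)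
qed

definition sh :: "(nat \<Rightarrow> rat) \<Rightarrow> nat \<Rightarrow> rat" where
  "sh w = (\<lambda>k. if k \<le> r - 2 then (if 1 \<le> k then w (k-1) else 0)
      - (if k+1 \<le> r-2 then of_int (e (k+1) * e (k+2)) * w (k+1) else 0) else 0)"

lemma sh_vm: "sh (vm u v) = vm u (sh v)"
proof
  fix k
  show "sh (vm u v) k = vm u (sh v) k"
  proof (cases "k \<le> r - 2")
    case False then show ?thesis by (simp add: sh_def vm_def)
  next
    case True
    define N where "N = r - 2"
    have kN: "k \<le> N" using True by (simp add: N_def)
    define X where "X i j = (if 1 \<le> k then mc i j (k-1) else 0) - (if k+1 \<le> N then of_int (e (k+1) * e (k+2)) * mc i j (k+1) else 0)" for i j
    have L: "sh (vm u v) k = (\<Sum>i\<le>N. \<Sum>j\<le>N. u i * v j * X i j)"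
    proof -
      have "sh (vm u v) k = (if 1 \<le> k then (\<Sum>i\<le>N. \<Sum>j\<le>N. u i * v j * mc i j (k-1)) else 0)
         - (if k+1 \<le> N then of_int (e (k+1) * e (k+2)) * (\<Sum>i\<le>N. \<Sum>j\<le>N. u i * v j * mc i j (k+1)) else 0)"
        using kN by (simp add: sh_def vm_def N_def)
      also have "\<dots> = (\<Sum>i\<le>N. \<Sum>j\<le>N. u i * v j * X i j)"
        unfolding X_def
        by (cases "1 \<le> k"; cases "k+1 \<le> N")
           (simp_all add: sum_subtractf sum_negf sum_distrib_left right_diff_distrib mult_ac)
      finally show ?thesis .
    qed
    have R: "vm u (sh v) k = (\<Sum>i\<le>N. \<Sum>j\<le>N. u i * v j * X i j)"
    proof -
      have "vm u (sh v) k = (\<Sum>i\<le>N. \<Sum>j\<le>N. sh v j * (u i * mc i j k))"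
        using kN by (simp add: vm_def N_def mult_ac)
      also have "\<dots> = (\<Sum>i\<le>N. \<Sum>j\<le>N. u i * v j * X i j)"
      proof (rule sum.cong[OF refl])
        fix i assume i: "i \<in> {..N}"
        define g where "g j = u i * mc i j k" for j
        have shv: "sh v j = (if 1 \<le> j then v (j-1) else 0) - (if j+1 \<le> N then v (j+1) else 0) * of_int (e (j+1) * e (j+2))"
          if "j \<le> N" for j using that by (simp add: sh_def N_def mult_ac)
        have "(\<Sum>j\<le>N. sh v j * g j) = (\<Sum>j\<le>N. (if 1 \<le> j then v (j-1) else 0) * g j)
             - (\<Sum>j\<le>N. (if j+1 \<le> N then v (j+1) else 0) * (of_int (e (j+1) * e (j+2)) * g j))"
          unfolding sum_subtractf[symmetric]
          by (intro sum.cong refl) (simp add: shv algebra_simps)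
        also have "\<dots> = (\<Sum>j\<le>N. v j * (if j+1 \<le> N then g (j+1) else 0))
             - (\<Sum>j\<le>N. v j * (if 1 \<le> j then of_int (e (j-1+1) * e (j-1+2)) * g (j-1) else 0))"
          using reidx2[of N v "\<lambda>j. of_int (e (j+1) * e (j+2)) * g j"] by (simp only: reidx1)
        also have "\<dots> = (\<Sum>j\<le>N. u i * v j * X i j)"
          unfolding sum_subtractf[symmetric]
        proof (rule sum.cong[OF refl])
          fix j assume j: "j \<in> {..N}"
          have eq: "X i j = (if j+1 \<le> N then mc i (j+1) k else 0) - (if 1 \<le> j then of_int (e j * e (j+1)) * mc i (j-1) k else 0)"
            unfolding X_def N_def using assoc_mc[of i j k] i j kN by (simp add: N_def)
          show "v j * (if j+1 \<le> N then g (j+1) else 0) - v j * (if 1 \<le> j then of_int (e (j-1+1) * e (j-1+2)) * g (j-1) else 0)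
             = u i * v j * X i j"
            unfolding eq g_def by (cases "1 \<le> j"; cases "j+1 \<le> N") (simp_all add: algebra_simps)
        qed
        finally show "(\<Sum>j\<le>N. sh v j * (u i * mc i j k)) = (\<Sum>j\<le>N. u i * v j * X i j)"
          unfolding g_def .
      qed
      finally show ?thesis .
    qed
    show ?thesis using L R by simp
  qed
qed

end

context knot begin

lemma mc_0: assumes "i \<le> r - 2" "k \<le> r - 2" shows "mc i 0 k = (if i = k then 1 else 0)"
proof (cases "i = k")
  case False
  then have "Vf i 0 k = 0" by (intro Vf_tri) auto
  then show ?thesis using False by (simp add: mc_def)
next
  case True
  have V: "Vf k 0 k = (-1)^k * Sg (k+1) * Sg k"
    using V_abc[of k k 0 0 0 k] assms by simp
  have "Sg (k+1) = Sg k * e (k+1)" by (rule Sg_add1)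
  moreover have "e (k+1) * e (k+1) = 1" using e_sq assms r3 by auto
  moreover have "Sg k * Sg k = 1" using Sg_sq assms by auto
  moreover have "((-1::int)^k) * (-1)^k = 1" by (simp flip: power_add)
  ultimately have "eta_d k * (Sg k * Sg 0 * Sg k * Vf k 0 k) = 1"
    unfolding V eta_d_def by (simp add: algebra_simps)
  then show ?thesis using True by (simp add: mc_def)
qed

lemma vm_unit: assumes "x \<in> Vq r" shows "vm x (vbasis 0) = x"
proof
  fix k
  show "vm x (vbasis 0) k = x k"
  proof (cases "k \<le> r - 2")
    case False then show ?thesis using assms by (simp add: vm_def Vq_def)
  next
    case True
    have "(\<Sum>i\<le>r-2. \<Sum>j\<le>r-2. x i * vbasis 0 j * mc i j k) = (\<Sum>i\<le>r-2. x i * mc i 0 k)"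
    proof (rule sum.cong[OF refl])
      fix i
      have "(\<Sum>j\<le>r-2. x i * vbasis 0 j * mc i j k) = (\<Sum>j\<le>r-2. vbasis 0 j * (x i * mc i j k))"
        by (simp add: mult_ac)
      also have "\<dots> = x i * mc i 0 k" by (rule sum_vbasis) simp
      finally show "(\<Sum>j\<le>r-2. x i * vbasis 0 j * mc i j k) = x i * mc i 0 k" .
    qed
    also have "\<dots> = (\<Sum>i\<le>r-2. if i = k then x k else 0)"
      by (intro sum.cong refl) (simp add: mc_0 True)
    also have "\<dots> = x k" using True by simp
    finally show ?thesis using True by (simp add: vm_def)
  qed
qed

lemma vm_add2: "vm x (\<lambda>k. y k + z k) = (\<lambda>k. vm x y k + vm x z k)"
  by (rule ext) (simp add: vm_def algebra_simps sum.distrib)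

lemma vm_scale2: "vm x (\<lambda>k. c * y k) = (\<lambda>k. c * vm x y k)"
  by (rule ext) (simp add: vm_def sum_distrib_left mult_ac)

lemma vm_zero1: "vm (\<lambda>k. 0) y = (\<lambda>k. 0)"
  by (rule ext) (simp add: vm_def)

definition T :: "(nat \<Rightarrow> rat) \<Rightarrow> nat \<Rightarrow> rat" where "T w = sh (sh w)"

lemma sh_add: "sh (\<lambda>k. a k + b k) = (\<lambda>k. sh a k + sh b k)"
  by (rule ext) (simp add: sh_def algebra_simps)
lemma sh_scale: "sh (\<lambda>k. c * a k) = (\<lambda>k. c * sh a k)"
  by (rule ext) (simp add: sh_def algebra_simps)
lemma sh_zero: "sh (\<lambda>k. 0) = (\<lambda>k. 0)"
  by (rule ext) (simp add: sh_def)
lemma sh_sum: "sh (\<lambda>k. \<Sum>i\<in>I. u i k) = (\<lambda>k. \<Sum>i\<in>I. sh (u i) k)"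
  by (rule ext) (simp add: sh_def sum_subtractf sum_distrib_left)

lemma T_add: "T (\<lambda>k. a k + b k) = (\<lambda>k. T a k + T b k)" by (simp add: T_def sh_add)
lemma T_scale: "T (\<lambda>k. c * a k) = (\<lambda>k. c * T a k)" by (simp add: T_def sh_scale)
lemma T_zero: "T (\<lambda>k. 0) = (\<lambda>k. 0)" by (simp add: T_def sh_zero)
lemma T_sum: "T (\<lambda>k. \<Sum>i\<in>I. u i k) = (\<lambda>k. \<Sum>i\<in>I. T (u i) k)" by (simp add: T_def sh_sum)

lemma sh_Vq: "sh w \<in> Vq r" by (simp add: sh_def Vq_def)
lemma T_Vq: "T w \<in> Vq r" by (simp add: T_def sh_Vq)

lemma vm_T: "vm x (T z) = T (vm x z)"
  unfolding T_def sh_vm ..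

end

context knot begin

definition Tp :: "nat \<Rightarrow> nat \<Rightarrow> rat" where "Tp i = (T ^^ i) (vbasis 0)"

definition phi :: "rat poly \<Rightarrow> nat \<Rightarrow> rat" where
  "phi p = (\<lambda>k. \<Sum>i\<le>degree p. coeff p i * Tp i k)"

lemma Tp_Suc: "Tp (Suc i) = T (Tp i)" by (simp add: Tp_def)
lemma Tp_0: "Tp 0 = vbasis 0" by (simp add: Tp_def)

lemma phi_bound: assumes "degree p \<le> N" shows "phi p = (\<lambda>k. \<Sum>i\<le>N. coeff p i * Tp i k)"
proof
  fix k
  show "phi p k = (\<Sum>i\<le>N. coeff p i * Tp i k)"
    unfolding phi_def
    by (rule sum.mono_neutral_left) (use assms in \<open>auto simp: coeff_eq_0\<close>)
qed

lemma phi_add: "phi (p + q) = (\<lambda>k. phi p k + phi q k)"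
proof -
  define N where "N = max (degree p) (degree q)"
  have "degree p \<le> N" "degree q \<le> N" unfolding N_def by auto
  moreover then have "degree (p + q) \<le> N" by (intro degree_add_le)
  ultimately
  show ?thesis
    by (simp add: phi_bound[of _ N] sum.distrib algebra_simps)
qed

lemma phi_smult: "phi (smult c p) = (\<lambda>k. c * phi p k)"
proof -
  have "degree (smult c p) \<le> degree p" by (rule degree_smult_le)
  then show ?thesis
    by (simp add: phi_bound[of _ "degree p"] sum_distrib_left mult_ac)
qed

lemma phi_diff: "phi (p - q) = (\<lambda>k. phi p k - phi q k)"
proof -
  have "phi (p + smult (-1) q) = (\<lambda>k. phi p k - phi q k)" unfolding phi_add phi_smult by simp
  moreover have "p + smult (-1) q = p - q" by simp
  ultimately show ?thesis by simp
qed

lemma phi_0: "phi 0 = (\<lambda>k. 0)" by (simp add: phi_def)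

lemma phi_sum: "finite L \<Longrightarrow> phi (\<Sum>l\<in>L. g l) = (\<lambda>k. \<Sum>l\<in>L. phi (g l) k)"
  by (induction L rule: finite_induct) (simp_all add: phi_0 phi_add)

lemma phi_pCons: "phi (pCons a p) = (\<lambda>k. a * vbasis 0 k + T (phi p) k)"
proof -
  define N where "N = degree p"
  have d: "degree (pCons a p) \<le> Suc N" unfolding N_def by (rule degree_pCons_le)
  have Tphi: "T (phi p) = (\<lambda>k. \<Sum>i\<le>N. coeff p i * Tp (Suc i) k)"
  proof -
    have "T (phi p) = T (\<lambda>k. \<Sum>i\<le>N. (\<lambda>k. coeff p i * Tp i k) k)" by (simp add: phi_def N_def)
    also have "\<dots> = (\<lambda>k. \<Sum>i\<le>N. T (\<lambda>k. coeff p i * Tp i k) k)" by (rule T_sum)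
    also have "\<dots> = (\<lambda>k. \<Sum>i\<le>N. coeff p i * Tp (Suc i) k)" by (simp add: T_scale Tp_Suc)
    finally show ?thesis .
  qed
  show ?thesis
    unfolding phi_bound[OF d] Tphi sum.atMost_Suc_shift by (simp add: Tp_0 mult_ac)
qed

lemma vm_zero2: "vm x (\<lambda>k. 0) = (\<lambda>k. 0)"
  by (rule ext) (simp add: vm_def)

lemma Tp_Vq: "Tp i \<in> Vq r"
proof (cases i)
  case 0 then show ?thesis using r3 by (auto simp: Tp_0 Vq_def vbasis_def)
next
  case (Suc j) then show ?thesis by (simp add: Tp_Suc T_Vq)
qed

lemma phi_Vq: "phi p \<in> Vq r"
  using Tp_Vq by (simp add: phi_def Vq_def)

lemma phi_mult: "phi (p * q) = vm (phi p) (phi q)"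
proof (induction q rule: pCons_induct)
  case 0 then show ?case by (simp add: phi_0 vm_zero2)
next
  case (pCons a q)
  have "p * pCons a q = smult a p + pCons 0 (p * q)" by simp
  then have "phi (p * pCons a q) = (\<lambda>k. a * phi p k + T (vm (phi p) (phi q)) k)"
    by (simp add: phi_add phi_smult phi_pCons pCons.IH)
  also have "\<dots> = vm (phi p) (\<lambda>k. a * vbasis 0 k + T (phi q) k)"
    by (simp add: vm_add2 vm_scale2 vm_unit[OF phi_Vq] vm_T)
  finally show ?case by (simp add: phi_pCons)
qed

lemma phi_1: "phi 1 = vbasis 0" by (simp add: phi_def Tp_0)

end

context knot begin

lemma sh_Vplus_odd: assumes "w \<in> Vplus r" shows "even k \<or> r - 2 < k \<Longrightarrow> sh w k = 0"
proof -
  assume k: "even k \<or> r - 2 < k"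
  have w: "\<And>j. r - 3 < j \<or> odd j \<Longrightarrow> w j = 0" using assms unfolding Vplus_def by blast
  show ?thesis
  proof (cases "r - 2 < k")
    case True then show ?thesis by (simp add: sh_def)
  next
    case False
    then have "even k" using k by auto
    then have "odd (k - 1) \<or> k = 0" "odd (k + 1)" by auto
    then show ?thesis using w by (auto simp: sh_def)
  qed
qed

lemma sh_odd_Vplus: assumes "\<And>j. even j \<or> r - 2 < j \<Longrightarrow> v j = 0" shows "sh v \<in> Vplus r"
  unfolding Vplus_def
proof (intro CollectI allI impI)
  fix k assume k: "r - 3 < k \<or> odd k"
  show "sh v k = 0"
  proof (cases "r - 2 < k")
    case True then show ?thesis by (simp add: sh_def)
  next
    case False
    have "odd k"
    proof (rule ccontr)
      assume "\<not> odd k"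
      then have "r - 3 < k" using k by auto
      then have "k = r - 2" using False by auto
      moreover have "odd (r - 2)" using rodd r3 by simp
      ultimately show False using \<open>\<not> odd k\<close> by simp
    qed
    then have "even (k - 1)" "even (k + 1)" by auto
    then show ?thesis using assms by (auto simp: sh_def)
  qed
qed

lemma T_Vplus: "w \<in> Vplus r \<Longrightarrow> T w \<in> Vplus r"
  unfolding T_def by (rule sh_odd_Vplus) (rule sh_Vplus_odd)

lemma Tp_Vplus: "Tp i \<in> Vplus r"
proof (induction i)
  case 0 then show ?case using r3 by (auto simp: Tp_0 Vplus_def vbasis_def)
next
  case (Suc i) then show ?case by (simp add: Tp_Suc T_Vplus)
qed

lemma phi_Vplus: "phi p \<in> Vplus r"
  using Tp_Vplus by (simp add: phi_def Vplus_def)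

lemma Tp_tri: "2 * m \<le> r - 3 \<Longrightarrow> Tp m (2 * m) = 1 \<and> (\<forall>k. 2 * m < k \<longrightarrow> Tp m k = 0)"
proof (induction m)
  case 0 then show ?case by (simp add: Tp_0 vbasis_def)
next
  case (Suc m)
  define w where "w = Tp m"
  have IH: "w (2 * m) = 1" "\<And>k. 2 * m < k \<Longrightarrow> w k = 0" using Suc by (auto simp: w_def)
  have lim: "2 * m + 2 \<le> r - 3" using Suc.prems by simp
  have s1: "sh w (2 * m + 1) = 1" using IH lim by (simp add: sh_def)
  have s2: "sh w j = 0" if "2 * m + 1 < j" for j
    using IH(2)[of "j - 1"] IH(2)[of "j + 1"] that by (simp add: sh_def)
  have t1: "T w (2 * m + 2) = 1"
    using s1 s2[of "2 * m + 3"] lim by (simp add: T_def sh_def[of "sh w"] eval_nat_numeral)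
  have t2: "T w k = 0" if "2 * m + 2 < k" for k
    using s2[of "k - 1"] s2[of "k + 1"] that by (simp add: T_def sh_def[of "sh w"])
  show ?case using t1 t2 by (simp add: Tp_Suc w_def)
qed

lemma phi_inj: assumes "q \<noteq> 0" "2 * degree q \<le> r - 3" shows "phi q \<noteq> (\<lambda>k. 0)"
proof -
  define d where "d = degree q"
  have "phi q (2 * d) = (\<Sum>i\<le>d. coeff q i * Tp i (2 * d))" by (simp add: phi_def d_def)
  also have "\<dots> = (\<Sum>i\<le>d. if i = d then coeff q d else 0)"
  proof (rule sum.cong[OF refl])
    fix i assume i: "i \<in> {..d}"
    show "coeff q i * Tp i (2 * d) = (if i = d then coeff q d else 0)"
    proof (cases "i = d")
      case True then show ?thesis using Tp_tri[of d] assms by (simp add: d_def)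
    next
      case False
      then have "2 * i < 2 * d" "2 * i \<le> r - 3" using i assms by (auto simp: d_def)
      then show ?thesis using Tp_tri[of i] False by simp
    qed
  qed
  also have "\<dots> = coeff q d" by simp
  finally have "phi q (2 * d) \<noteq> 0" using assms by (simp add: d_def)
  then show ?thesis by metis
qed

lemma phi_monom: "phi (monom 1 m) = Tp m"
proof
  fix k
  have "phi (monom 1 m) k = (\<Sum>i\<le>m. (if m = i then 1 else 0) * Tp i k)"
    by (simp add: phi_def degree_monom_eq coeff_monom)
  also have "\<dots> = (\<Sum>i\<le>m. if i = m then Tp m k else 0)" by (intro sum.cong refl) auto
  also have "\<dots> = Tp m k" by simp
  finally show "phi (monom 1 m) k = Tp m k" .
qed

lemma vb_range: "2 * m \<le> r - 3 \<Longrightarrow> \<exists>p. phi p = vbasis (2 * m)"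
proof (induction m rule: less_induct)
  case (less m)
  have "\<forall>l\<in>{..<m}. \<exists>p. phi p = vbasis (2 * l)" using less by auto
  then obtain P where P: "\<And>l. l < m \<Longrightarrow> phi (P l) = vbasis (2 * l)" by (metis bchoice lessThan_iff)
  define p where "p = monom 1 m - (\<Sum>l<m. smult (Tp m (2 * l)) (P l))"
  have "phi p = vbasis (2 * m)"
  proof
    fix k
    have "phi p k = Tp m k - (\<Sum>l<m. Tp m (2 * l) * vbasis (2 * l) k)"
      by (simp add: p_def phi_diff phi_sum phi_smult phi_monom P)
    also have "\<dots> = vbasis (2 * m) k"
    proof (cases "even k \<and> k < 2 * m")
      case True
      then have "(\<Sum>l<m. Tp m (2 * l) * vbasis (2 * l) k) = (\<Sum>l<m. if l = k div 2 then Tp m k else 0)"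
        by (intro sum.cong refl) (auto simp: vbasis_def)
      also have "\<dots> = Tp m k" using True by auto
      finally show ?thesis using True by (simp add: vbasis_def)
    next
      case False
      then have "(\<Sum>l<m. Tp m (2 * l) * vbasis (2 * l) k) = 0"
        by (intro sum.neutral) (auto simp: vbasis_def)
      moreover have "Tp m k = vbasis (2 * m) k"
      proof (cases "k = 2 * m")
        case True then show ?thesis using Tp_tri[OF less.prems] by (simp add: vbasis_def)
      next
        case ne: False
        show ?thesis
        proof (cases "odd k")
          case True then show ?thesis using Tp_Vplus[of m] ne by (auto simp: Vplus_def vbasis_def)
        next
          case False
          then have "2 * m < k" using \<open>\<not> (even k \<and> k < 2 * m)\<close> ne by auto
          then show ?thesis using Tp_tri[OF less.prems] ne by (simp add: vbasis_def)
        qed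
      qed
      ultimately show ?thesis by simp
    qed
    finally show "phi p k = vbasis (2 * m) k" .
  qed
  then show ?case by blast
qed

lemma Vplus_range: assumes "x \<in> Vplus r" shows "\<exists>p. phi p = x"
proof -
  define M where "M = (r - 3) div 2"
  have "\<forall>l\<in>{..M}. \<exists>p. phi p = vbasis (2 * l)" using vb_range by (auto simp: M_def)
  then obtain P where P: "\<And>l. l \<le> M \<Longrightarrow> phi (P l) = vbasis (2 * l)" by (metis bchoice atMost_iff)
  define p where "p = (\<Sum>l\<le>M. smult (x (2 * l)) (P l))"
  have "phi p = x"
  proof
    fix k
    have "phi p k = (\<Sum>l\<le>M. x (2 * l) * vbasis (2 * l) k)"
      by (simp add: p_def phi_sum phi_smult P)
    also have "\<dots> = x k"
    proof (cases "even k \<and> k \<le> r - 3")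
      case True
      then have "(\<Sum>l\<le>M. x (2 * l) * vbasis (2 * l) k) = (\<Sum>l\<le>M. if l = k div 2 then x k else 0)"
        by (intro sum.cong refl) (auto simp: vbasis_def)
      also have "\<dots> = x k" using True rodd by (auto simp: M_def)
      finally show ?thesis .
    next
      case False
      then have "(\<Sum>l\<le>M. x (2 * l) * vbasis (2 * l) k) = 0"
        using rodd by (intro sum.neutral) (auto simp: vbasis_def M_def)
      moreover have "x k = 0" using assms False by (auto simp: Vplus_def)
      ultimately show ?thesis by simp
    qed
    finally show "phi p k = x k" .
  qed
  then show ?thesis by blast
qed

end

lemma pmat_mult_assoc: "pmat_mult (pmat_mult A B) C = pmat_mult A (pmat_mult B C)"
  by (cases A; cases B; cases C) (simp add: pmat_mult_def algebra_simps)

lemma pmat_mult_id1: "pmat_mult pmat_id A = A"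
  by (cases A) (simp add: pmat_mult_def pmat_id_def)
lemma pmat_mult_id2: "pmat_mult A pmat_id = A"
  by (cases A) (simp add: pmat_mult_def pmat_id_def)

lemma pmat_prod_left: "pmat_prod A i (Suc n) = pmat_mult (pmat_prod A i n) (A (i + n))"
proof (induction n arbitrary: i)
  case 0 then show ?case by (simp add: pmat_mult_id1 pmat_mult_id2)
next
  case (Suc n)
  have "pmat_prod A i (Suc (Suc n)) = pmat_mult (A i) (pmat_prod A (Suc i) (Suc n))" by simp
  also have "\<dots> = pmat_mult (A i) (pmat_mult (pmat_prod A (Suc i) n) (A (Suc i + n)))" by (simp only: Suc.IH)
  also have "\<dots> = pmat_mult (pmat_prod A i (Suc n)) (A (i + Suc n))" by (simp add: pmat_mult_assoc)
  finally show ?case .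
qed

context knot begin

lemma rf_odd: assumes "1 \<le> k" "k \<le> r - 1" "odd k"
  shows "riley_factor r s k = (1, [:of_int (e k):], 0, 1)"
proof -
  have m: "(-1 :: rat poly) = [:-1:]" by (simp add: one_pCons)
  show ?thesis using e_pm[OF assms(1,2)] assms(3)
    by (auto simp: riley_factor_def pmat_pow_sign_def pmat_inv_def e_def[symmetric] m one_pCons)
qed

lemma rf_even: assumes "1 \<le> k" "k \<le> r - 1" "even k"
  shows "riley_factor r s k = (1, 0, [:0, of_int (e k):], 1)"
  using e_pm[OF assms(1,2)] assms(3)
  by (auto simp: riley_factor_def pmat_pow_sign_def pmat_inv_def e_def[symmetric])

definition pr :: "nat \<Rightarrow> rat poly" where "pr k = fst (pmat_prod (riley_factor r s) 1 k)"
definition qr :: "nat \<Rightarrow> rat poly" where "qr k = fst (snd (pmat_prod (riley_factor r s) 1 k))"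

lemma pr0: "pr 0 = 1" and qr0: "qr 0 = 0" by (simp_all add: pr_def qr_def pmat_id_def)

lemma step_odd: assumes "k + 1 \<le> r - 1" "odd (k + 1)"
  shows "pr (k+1) = pr k" "qr (k+1) = pr k * [:of_int (e (k+1)):] + qr k"
proof -
  obtain a b c d where M: "pmat_prod (riley_factor r s) 1 k = (a, b, c, d)" by (metis prod.exhaust)
  have "pmat_prod (riley_factor r s) 1 (k+1) = pmat_mult (a, b, c, d) (1, [:of_int (e (k+1)):], 0, 1)"
    using pmat_prod_left[of "riley_factor r s" 1 k] rf_odd[of "k+1"] assms M by simp
  then show "pr (k+1) = pr k" "qr (k+1) = pr k * [:of_int (e (k+1)):] + qr k"
    using M by (simp_all add: pr_def qr_def pmat_mult_def)
qed

lemma step_even: assumes "k + 1 \<le> r - 1" "even (k + 1)"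
  shows "pr (k+1) = pr k + qr k * [:0, of_int (e (k+1)):]" "qr (k+1) = qr k"
proof -
  obtain a b c d where M: "pmat_prod (riley_factor r s) 1 k = (a, b, c, d)" by (metis prod.exhaust)
  have "k + 1 \<ge> 1" by simp
  have "pmat_prod (riley_factor r s) 1 (k+1) = pmat_mult (a, b, c, d) (1, 0, [:0, of_int (e (k+1)):], 1)"
    using pmat_prod_left[of "riley_factor r s" 1 k] rf_even[of "k+1"] assms M by simp
  then show "pr (k+1) = pr k + qr k * [:0, of_int (e (k+1)):]" "qr (k+1) = qr k"
    using M by (simp_all add: pr_def qr_def pmat_mult_def)
qed

lemma riley_pr: "riley r s = pr (r - 1)" by (simp add: riley_def pr_def)

end

context knot begin

definition Fb :: "nat \<Rightarrow> nat \<Rightarrow> rat" where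
  "Fb m = (\<lambda>l. if 2 * m \<le> r - 3 \<and> l = 2 * m then 1 else 0)"

lemma sh_Fb: assumes "2 * m \<le> r - 3"
  shows "sh (Fb m) = (\<lambda>j. (if j = 2*m+1 then 1 else 0) - (if j + 1 = 2*m then of_int (e (2*m) * e (2*m+1)) else 0))"
proof
  fix j
  show "sh (Fb m) j = (if j = 2*m+1 then 1 else 0) - (if j + 1 = 2*m then of_int (e (2*m) * e (2*m+1)) else 0)"
  proof (cases "j \<le> r - 2")
    case False then show ?thesis using assms r3 by (auto simp: sh_def)
  next
    case True
    then show ?thesis using assms unfolding sh_def Fb_def
      by (auto simp: eval_nat_numeral)
  qed
qed

lemma T_Fb: assumes lim: "2 * m \<le> r - 3"
  shows "T (Fb m) = (\<lambda>l. Fb (m+1) l - of_int (e (2*m+1) * e (2*m+2) + (if 1 \<le> m then e (2*m) * e (2*m+1) else 0)) * Fb m l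
      + (if 1 \<le> m then of_int (e (2*m-1) * e (2*m+1)) * Fb (m-1) l else 0))"
proof
  fix l
  define E where "E = e (2*m) * e (2*m+1)"
  have T: "T (Fb m) l = (if l \<le> r - 2 then (if 1 \<le> l then (if l - 1 = 2*m+1 then 1 else 0) - (if l = 2*m then of_int E else 0) else 0)
     - (if l + 1 \<le> r - 2 then of_int (e (l+1) * e (l+2)) * ((if l + 1 = 2*m+1 then 1 else 0) - (if l + 2 = 2*m then of_int E else 0)) else 0) else 0)"
    unfolding T_def sh_Fb[OF lim] E_def by (simp add: sh_def)
  consider "l = 2*m+2" | "l = 2*m" | "l + 2 = 2*m" | "l \<noteq> 2*m+2" "l \<noteq> 2*m" "l + 2 \<noteq> 2*m" by blast
  then show "T (Fb m) l = Fb (m+1) l - of_int (e (2*m+1) * e (2*m+2) + (if 1 \<le> m then e (2*m) * e (2*m+1) else 0)) * Fb m l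
      + (if 1 \<le> m then of_int (e (2*m-1) * e (2*m+1)) * Fb (m-1) l else 0)"
  proof cases
    case 1
    have par: "2*m + 2 \<le> r - 3 \<or> 2*m + 2 = r - 1" using lim rodd r3 by presburger
    then show ?thesis unfolding T using lim 1 r3 by (auto simp: Fb_def)
  next
    case 2
    then show ?thesis unfolding T using lim r3 by (auto simp: Fb_def E_def)
  next
    case 3
    then have m1: "1 \<le> m" by auto
    have sq: "e (2*m) * e (2*m) = 1" using e_sq[of "2*m"] m1 lim by auto
    have "of_int (e (l+1) * e (l+2)) * of_int E = (of_int (e (2*m-1) * e (2*m+1)) :: rat)"
    proof -
      have "l + 1 = 2*m - 1" "l + 2 = 2*m" using 3 by auto
      then have "e (l+1) * e (l+2) * E = e (2*m-1) * e (2*m+1)" unfolding E_def using sq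
        by (simp add: algebra_simps)
      then show ?thesis by (metis of_int_mult)
    qed
    then have key: "of_int (e (l+1) * e (l+2)) * of_int E = (of_int (e (2*m-1) * e (2*m+1)) :: rat)" .
    have lhs: "T (Fb m) l = of_int (e (l+1) * e (l+2)) * of_int E" unfolding T using 3 lim r3 by auto
    have "Fb (m+1) l = 0" "Fb m l = 0" "Fb (m-1) l = 1" using 3 lim by (auto simp: Fb_def)
    then show ?thesis using lhs key m1 by simp
  next
    case 4
    then show ?thesis unfolding T using lim r3 by (auto simp: Fb_def)
  qed
qed

end

context knot begin

definition Qv :: "nat \<Rightarrow> nat \<Rightarrow> rat" where
  "Qv j = (\<lambda>l. \<Sum>i\<le>j. of_int (Sg (2*i+1)) * Fb i l)"

lemma TQv_sum: "T (Qv j) = (\<lambda>l. \<Sum>i\<le>j. of_int (Sg (2*i+1)) * T (Fb i) l)"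
proof -
  have "T (Qv j) = T (\<lambda>l. \<Sum>i\<le>j. (\<lambda>l. of_int (Sg (2*i+1)) * Fb i l) l)" by (simp add: Qv_def)
  also have "\<dots> = (\<lambda>l. \<Sum>i\<le>j. T (\<lambda>l. of_int (Sg (2*i+1)) * Fb i l) l)" by (rule T_sum)
  also have "\<dots> = (\<lambda>l. \<Sum>i\<le>j. of_int (Sg (2*i+1)) * T (Fb i) l)" by (simp add: T_scale)
  finally show ?thesis .
qed

lemma pm_e: "1 \<le> n \<Longrightarrow> n \<le> r - 1 \<Longrightarrow> e n = 1 \<or> e n = -1" by (rule e_pm)

lemma TQ: "2 * j \<le> r - 3 \<Longrightarrow> T (Qv j) = (\<lambda>l. of_int (Sg (2*j+1)) * Fb (j+1) l - of_int (e (2*j+2) * Sg (2*j)) * Fb j l)"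
proof (induction j)
  case 0
  have s1: "Sg 1 = 1" using Sg_Suc[of 0] e1 by simp
  show ?case unfolding TQv_sum using T_Fb[of 0] 0 s1 e1 by simp
next
  case (Suc j)
  have lim: "2 * j + 2 \<le> r - 3" using Suc.prems by simp
  have IH: "T (Qv j) = (\<lambda>l. of_int (Sg (2*j+1)) * Fb (j+1) l - of_int (e (2*j+2) * Sg (2*j)) * Fb j l)"
    using Suc.IH lim by simp
  have split: "T (Qv (Suc j)) = (\<lambda>l. T (Qv j) l + of_int (Sg (2*j+3)) * T (Fb (j+1)) l)"
    unfolding TQv_sum by (simp add: eval_nat_numeral)
  have TF: "T (Fb (j+1)) = (\<lambda>l. Fb (j+2) l - of_int (e (2*j+3) * e (2*j+4) + e (2*j+2) * e (2*j+3)) * Fb (j+1) l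
      + of_int (e (2*j+1) * e (2*j+3)) * Fb j l)"
    using T_Fb[of "j+1"] lim by (simp add: eval_nat_numeral)
  have S: "Sg (2*j+1) = Sg (2*j) * e (2*j+1)" "Sg (2*j+2) = Sg (2*j) * e (2*j+1) * e (2*j+2)"
    "Sg (2*j+3) = Sg (2*j) * e (2*j+1) * e (2*j+2) * e (2*j+3)"
    using Sg_Suc[of "2*j"] Sg_Suc[of "2*j+1"] Sg_Suc[of "2*j+2"] by (simp_all add: eval_nat_numeral)
  have pms: "Sg (2*j) = 1 \<or> Sg (2*j) = -1" "e (2*j+1) = 1 \<or> e (2*j+1) = -1" "e (2*j+2) = 1 \<or> e (2*j+2) = -1"
    "e (2*j+3) = 1 \<or> e (2*j+3) = -1" "e (2*j+4) = 1 \<or> e (2*j+4) = -1"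
    using Sg_pm[of "2*j"] pm_e[of "2*j+1"] pm_e[of "2*j+2"] pm_e[of "2*j+3"] pm_e[of "2*j+4"] lim by auto
  have I1: "- (e (2*j+2) * Sg (2*j)) + Sg (2*j+3) * (e (2*j+1) * e (2*j+3)) = 0"
    unfolding S using pms by auto
  have I2: "Sg (2*j+1) - Sg (2*j+3) * (e (2*j+3) * e (2*j+4) + e (2*j+2) * e (2*j+3)) = - (e (2*j+4) * Sg (2*j+2))"
    unfolding S using pms by auto
  show ?case
  proof
    fix l
    have "T (Qv (Suc j)) l = of_int (Sg (2*j+3)) * Fb (j+2) l
       + of_int (Sg (2*j+1) - Sg (2*j+3) * (e (2*j+3) * e (2*j+4) + e (2*j+2) * e (2*j+3))) * Fb (j+1) l
       + of_int (- (e (2*j+2) * Sg (2*j)) + Sg (2*j+3) * (e (2*j+1) * e (2*j+3))) * Fb j l"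
      unfolding split IH TF by (simp add: algebra_simps)
    also have "\<dots> = of_int (Sg (2*j+3)) * Fb (j+2) l - of_int (e (2*j+4) * Sg (2*j+2)) * Fb (j+1) l"
      unfolding I1 I2 by simp
    finally show "T (Qv (Suc j)) l = of_int (Sg (2 * Suc j + 1)) * Fb (Suc j + 1) l - of_int (e (2 * Suc j + 2) * Sg (2 * Suc j)) * Fb (Suc j) l"
      by (simp add: eval_nat_numeral)
  qed
qed


lemma phi_mult_const: "phi (p * [:c:]) = (\<lambda>l. c * phi p l)"
proof -
  have "p * [:c:] = smult c p" by simp
  then show ?thesis by (simp add: phi_smult)
qed

lemma phi_mult_X: "phi (p * [:0, c:]) = (\<lambda>l. c * T (phi p) l)"
proof -
  have "p * [:0, c:] = pCons 0 (smult c p)" by simp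
  then show ?thesis by (simp add: phi_pCons phi_smult T_scale)
qed

lemma Qv_Suc: "Qv (Suc j) = (\<lambda>l. Qv j l + of_int (Sg (2*j+3)) * Fb (Suc j) l)"
  by (simp add: Qv_def eval_nat_numeral)

lemma INV: "2 * j \<le> r - 1 \<Longrightarrow> phi (pr (2*j)) = (\<lambda>l. of_int (Sg (2*j)) * Fb j l) \<and>
    phi (qr (2*j)) = (if j = 0 then (\<lambda>l. 0) else Qv (j - 1))"
proof (induction j)
  case 0
  have "phi 1 = (\<lambda>l. of_int (Sg 0) * Fb 0 l)" using r3 by (auto simp: phi_1 Fb_def vbasis_def)
  then show ?case by (simp add: pr0 qr0 phi_0)
next
  case (Suc j)
  have lim: "2 * j + 2 \<le> r - 1" using Suc.prems by simp
  have IH: "phi (pr (2*j)) = (\<lambda>l. of_int (Sg (2*j)) * Fb j l)"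
    "phi (qr (2*j)) = (if j = 0 then (\<lambda>l. 0) else Qv (j - 1))" using Suc.IH lim by auto
  have o: "pr (2*j+1) = pr (2*j)" "qr (2*j+1) = pr (2*j) * [:of_int (e (2*j+1)):] + qr (2*j)"
    using step_odd[of "2*j"] lim by auto
  have h2: "2*j+1+1 = 2*j+2" by simp
  have ev2: "even (2*j+2)" by presburger
  have ev: "pr (2*j+2) = pr (2*j+1) + qr (2*j+1) * [:0, of_int (e (2*j+2)):]" "qr (2*j+2) = qr (2*j+1)"
    using step_even[of "2*j+1", unfolded h2] lim ev2 by auto
  have Sg1: "Sg (2*j+1) = Sg (2*j) * e (2*j+1)" using Sg_Suc[of "2*j"] by simp
  have Sg2: "Sg (2*j+2) = Sg (2*j+1) * e (2*j+2)" using Sg_Suc[of "2*j+1"] by (simp add: eval_nat_numeral)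
  have ee: "e (2*j+2) * e (2*j+2) = 1" using e_sq[of "2*j+2"] lim by auto
  have q1: "phi (qr (2*j+1)) = Qv j"
  proof
    fix l
    show "phi (qr (2*j+1)) l = Qv j l"
    proof (cases j)
      case 0
      have s1: "Sg (Suc 0) = 1" using Sg_Suc[of 0] e1 by simp
      show ?thesis using IH 0 s1 e1 unfolding o by (simp add: phi_add phi_smult Qv_def)
    next
      case (Suc j')
      have s: "(of_int (Sg (2*j+1)) :: rat) = of_int (Sg (2*j)) * of_int (e (2*j+1))" using Sg1 by simp
      show ?thesis using IH Suc s unfolding o
        by (simp add: phi_add phi_mult_const phi_smult Qv_Suc mult_ac eval_nat_numeral)
    qed
  qed
  have p2: "phi (pr (2*j+2)) = (\<lambda>l. of_int (Sg (2*j+2)) * Fb (j+1) l)"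
  proof
    fix l
    have "phi (pr (2*j+2)) l = of_int (Sg (2*j)) * Fb j l + of_int (e (2*j+2)) * T (Qv j) l"
      unfolding ev o(1) using IH q1 by (simp add: phi_add phi_pCons phi_smult T_scale)
    also have "\<dots> = of_int (Sg (2*j+2)) * Fb (j+1) l"
    proof -
      have TQj: "T (Qv j) l = of_int (Sg (2*j+1)) * Fb (j+1) l - of_int (e (2*j+2) * Sg (2*j)) * Fb j l"
        using TQ[of j] lim by simp
      have "of_int (e (2*j+2)) * of_int (e (2*j+2) * Sg (2*j)) = (of_int (Sg (2*j)) :: rat)"
        using ee by (metis mult.assoc mult_1 of_int_mult)
      then show ?thesis unfolding TQj Sg2 by (simp add: algebra_simps)
    qed
    finally show "phi (pr (2*j+2)) l = of_int (Sg (2*j+2)) * Fb (j+1) l" .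
  qed
  have q2: "phi (qr (2*j+2)) = Qv j" using ev(2) q1 by simp
  show ?case using p2 q2 by (simp add: eval_nat_numeral)
qed

lemma phi_riley: "phi (riley r s) = (\<lambda>l. 0)"
proof -
  define n where "n = (r - 1) div 2"
  have rn: "r - 1 = 2 * n" using rodd unfolding n_def by presburger
  have "phi (pr (2*n)) = (\<lambda>l. of_int (Sg (2*n)) * Fb n l)" using INV[of n] rn by simp
  moreover have "\<not> 2 * n \<le> r - 3" using rn r3 by linarith
  then have "Fb n = (\<lambda>l. 0)" by (simp add: Fb_def)
  moreover have "riley r s = pr (2*n)" by (simp only: riley_pr rn)
  ultimately show ?thesis by simp
qed

lemma DEG: "2 * j \<le> r - 1 \<Longrightarrow> (\<forall>i>j. coeff (pr (2*j)) i = 0) \<and> coeff (pr (2*j)) j \<noteq> 0 \<and> (\<forall>i\<ge>j. coeff (qr (2*j)) i = 0)"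
proof (induction j)
  case 0 then show ?case by (simp add: pr0 qr0 coeff_1)
next
  case (Suc j)
  have lim: "2 * j + 2 \<le> r - 1" using Suc.prems by simp
  have IH: "\<forall>i>j. coeff (pr (2*j)) i = 0" "coeff (pr (2*j)) j \<noteq> 0" "\<forall>i\<ge>j. coeff (qr (2*j)) i = 0"
    using Suc.IH lim by auto
  have o: "pr (2*j+1) = pr (2*j)" "qr (2*j+1) = pr (2*j) * [:of_int (e (2*j+1)):] + qr (2*j)"
    using step_odd[of "2*j"] lim by auto
  have h2: "2*j+1+1 = 2*j+2" by simp
  have ev2: "even (2*j+2)" by presburger
  have ev: "pr (2*j+2) = pr (2*j+1) + qr (2*j+1) * [:0, of_int (e (2*j+2)):]" "qr (2*j+2) = qr (2*j+1)"
    using step_even[of "2*j+1", unfolded h2] lim ev2 by auto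
  have c1: "(of_int (e (2*j+1)) :: rat) \<noteq> 0" using pm_e[of "2*j+1"] lim by auto
  have c2: "(of_int (e (2*j+2)) :: rat) \<noteq> 0" using pm_e[of "2*j+2"] lim by auto
  have cq: "coeff (qr (2*j+1)) i = of_int (e (2*j+1)) * coeff (pr (2*j)) i + coeff (qr (2*j)) i" for i
    unfolding o by (simp add: mult.commute)
  have cp: "coeff (pr (2*j+2)) i = coeff (pr (2*j)) i + (if i = 0 then 0 else of_int (e (2*j+2)) * coeff (qr (2*j+1)) (i - 1))" for i
    unfolding ev o(1) by (cases i) (simp_all add: mult.commute)
  have A: "\<forall>i>j+1. coeff (pr (2*j+2)) i = 0" using IH cp cq by auto
  have B: "coeff (pr (2*j+2)) (j+1) \<noteq> 0" using IH cp cq c1 c2 by simp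
  have C: "\<forall>i\<ge>j+1. coeff (qr (2*j+2)) i = 0" using IH cq ev(2) by auto
  show ?case using A B C by (simp add: eval_nat_numeral)
qed

lemma riley_deg: "riley r s \<noteq> 0 \<and> degree (riley r s) \<le> (r - 1) div 2"
proof -
  define n where "n = (r - 1) div 2"
  have rn: "r - 1 = 2 * n" using rodd unfolding n_def by presburger
  have D: "\<forall>i>n. coeff (pr (2*n)) i = 0" "coeff (pr (2*n)) n \<noteq> 0" using DEG[of n] rn by auto
  have "riley r s = pr (2*n)" by (simp only: riley_pr rn)
  then show ?thesis using D by (auto simp: n_def intro: degree_le)
qed


lemma phi_kernel: "phi p = (\<lambda>k. 0) \<longleftrightarrow> riley r s dvd p"
proof
  assume "riley r s dvd p"
  then obtain g where g: "p = riley r s * g" by (elim dvdE)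
  show "phi p = (\<lambda>k. 0)" unfolding g phi_mult phi_riley by (rule vm_zero1)
next
  assume z: "phi p = (\<lambda>k. 0)"
  define R where "R = riley r s"
  have R: "R \<noteq> 0" "degree R \<le> (r - 1) div 2" using riley_deg by (auto simp: R_def)
  define m where "m = p mod R"
  have "m = p - p div R * R" unfolding m_def by (simp add: minus_div_mult_eq_mod)
  then have "phi m = (\<lambda>k. phi p k - phi (p div R * R) k)" by (simp add: phi_diff)
  also have "phi (p div R * R) = (\<lambda>k. 0)"
    by (simp add: phi_mult R_def phi_riley vm_comm[of "phi (p div riley r s)"] vm_zero1)
  finally have pm: "phi m = (\<lambda>k. 0)" using z by simp
  have "m = 0"
  proof (rule ccontr)
    assume m0: "m \<noteq> 0"
    then have "degree m < degree R" using degree_mod_less[OF R(1), of p] by (simp add: m_def)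
    then have "2 * degree m \<le> r - 3" using R(2) rodd r3 by presburger
    then show False using phi_inj[OF m0] pm by simp
  qed
  then show "riley r s dvd p" by (simp add: m_def R_def mod_eq_0_iff_dvd)
qed

lemma main: "\<exists>\<phi> :: rat poly \<Rightarrow> (nat \<Rightarrow> rat).
     \<phi> ` UNIV = Vplus r \<and>
     \<phi> 1 = vbasis 0 \<and>
     (\<forall>p q. \<phi> (p + q) = (\<lambda>k. \<phi> p k + \<phi> q k)) \<and>
     (\<forall>c p. \<phi> (smult c p) = (\<lambda>k. c * \<phi> p k)) \<and>
     (\<forall>p q. \<phi> (p * q) = vmult r s (\<phi> p) (\<phi> q)) \<and>
     (\<forall>p. \<phi> p = (\<lambda>k. 0) \<longleftrightarrow> riley r s dvd p)"
proof (intro exI[of _ phi] conjI allI)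
  show "range phi = Vplus r"
  proof
    show "range phi \<subseteq> Vplus r" using phi_Vplus by auto
    show "Vplus r \<subseteq> range phi" using Vplus_range by (metis rangeI subsetI)
  qed
  show "phi 1 = vbasis 0" by (rule phi_1)
  show "phi (p + q) = (\<lambda>k. phi p k + phi q k)" for p q by (rule phi_add)
  show "phi (smult c p) = (\<lambda>k. c * phi p k)" for c p by (rule phi_smult)
  show "phi (p * q) = vmult r s (phi p) (phi q)" for p q by (simp add: phi_mult vmult_eq)
  show "phi p = (\<lambda>k. 0) \<longleftrightarrow> riley r s dvd p" for p by (rule phi_kernel)
qed

end

theorem theorem1:
  fixes r s :: nat
  assumes "r \<ge> 3" "odd r" "odd s" "coprime r s" "0 < s" "s < r"
  shows "\<exists>\<phi> :: rat poly \<Rightarrow> (nat \<Rightarrow> rat).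
     \<phi> ` UNIV = Vplus r \<and>
     \<phi> 1 = vbasis 0 \<and>
     (\<forall>p q. \<phi> (p + q) = (\<lambda>k. \<phi> p k + \<phi> q k)) \<and>
     (\<forall>c p. \<phi> (smult c p) = (\<lambda>k. c * \<phi> p k)) \<and>
     (\<forall>p q. \<phi> (p * q) = vmult r s (\<phi> p) (\<phi> q)) \<and>
     (\<forall>p. \<phi> p = (\<lambda>k. 0) \<longleftrightarrow> riley r s dvd p)"
proof -
  interpret knot r s using assms by unfold_locales
  show ?thesis by (rule main)
qed


end
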